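(* Let $\mu$ be the self-similar measure of a WIFS satisfying the $\Phi$-FNC for an iteration rule $\Phi$. Then for every $q\in\mathbb R$, $$\tau_\mu(q)=\liminf_{t\to0}\frac{\log\sum_{\eta\in\mathcal F(t)}\rho(\eta)^q}{\log t}.$$
   Context: Setting. A weighted iterated function system (WIFS) $(S_i,p_i)_{i\in\mathcal I}$ consists of a finite index set $\mathcal I$, maps $S_i(x)=r_ix+d_i$ on $\mathbb R$ with $0<|r_i|<1$, and probabilities $p_i>0$ with $\sum_i p_i=1$. Its self-similar set $K$ is the unique nonempty compact set with $K=\bigcup_i S_i(K)$ and its self-similar measure $\mu$ is the unique Borel probability measure with $\mu(E)=\sum_i p_i\,\mu(S_i^{-1}(E))$. Standing assumptions: $K$ is not a singleton and its convex hull is $[0,1]$. For a finite word $\sigma=\sigma_1\cdots\sigma_n$ over $\mathcal I$ (the set of all finite words, including the empty word, is $\mathcal I^*$) put $S_\sigma=S_{\sigma_1}\circ\cdots\circ S_{\sigma_n}$. Iteration rules and net intervals. Fix a total order on the affine bijections $x\mapsto ax+b$ ($a\ne0$) of $\mathbb R$. For a closed interval $J$ let $T_J(x)=rx+c$ ($r>0$) be the map with $T_J([0,1])=J$. An iteration rule $\Phi$ assigns to each finite strictly increasing tuple $v=(f_1,\dots,f_m)$ of such maps a tuple $\Phi(v)=(\mathcal C_1,\dots,\mathcal C_m)$ of finite subsets of $\mathcal I^*$ such that for each $i$ and all large $n$ every word of length $n$ has a unique prefix in $\mathcal C_i$. Children of a pair $(\Delta,v)$, $\Delta=[a,b]$: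 let $\mathcal Y=\{T_\Delta\circ f_i\circ S_\tau:1\le i\le m,\tau\in\mathcal C_i\}$ and list $\{a,b\}\cup\{g(z):g\in\mathcal Y,z\in\{0,1\},g(z)\in\Delta\}$ as $a=y_1<\dots<y_{k+1}=b$; the children are the pairs $(\Delta',v')$ with $\Delta'=[y_j,y_{j+1}]$, $(y_j,y_{j+1})\cap K\ne\emptyset$, and $v'$ the increasing tuple of the distinct maps $T_{\Delta'}^{-1}\circ g$, $g\in\mathcal Y$, $g(K)\cap(y_j,y_{j+1})\ne\emptyset$. Let $\mathcal N_0=\{([0,1],(\mathrm{id}))\}$ and $\mathcal N_{n+1}$ the set of children of members of $\mathcal N_n$; for $(\Delta,v)\in\mathcal N_n$, $\Delta$ is a net interval of level $n$ with neighbour set $v$. $\Phi$ must also satisfy: (i) $\max\{r\,\mathrm{diam}\Delta:(\Delta,v)\in\mathcal N_n,(x\mapsto rx+c)\in v\}\to0$; (ii) if $f_1\neq f_2$ lie in a neighbour set then $f_1\circ S_\sigma\ne f_2$ for all $\sigma\in\mathcal I^*$. (Convention: a pair whose only child has the same interval is replaced by that child.) Transition graph. Children, their neighbour sets, relative positions and diameter ratios depend only on $v$. The transition graph $\mathcal G$ has as vertices the neighbour sets occurring, root $v_{\mathrm{root}}=(\mathrm{id})$, and one edge $e$ from $v$ to $v'$ for each child $(\Delta',v')$ of a pair $(\Delta,v)$ (distinguished by the relative position of $\Delta'$ in $\Delta$), with weight $W(e)=\mathrm{diam}\Delta'/\mathrm{diam}\Delta$; for a path $\eta=(e_1,\dots,e_n)$,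 $W(\eta)=\prod W(e_k)$. $\Omega^n,\Omega^*$ are the rooted paths (starting at $v_{\mathrm{root}}$) of length $n$, resp. finite. Each $\eta\in\Omega^n$ corresponds bijectively to a net interval $\pi(\eta)$ of level $n$ (following children), with $W(\eta)=\mathrm{diam}\,\pi(\eta)$; $\rho(\eta):=\mu(\pi(\eta))$. The WIFS satisfies the $\Phi$-FNC if $\mathcal G$ is finite. $\mathcal F(t)$ is the set of $(e_1,\dots,e_n)\in\Omega^*$ with $W(e_1\cdots e_n)\le t<W(e_1\cdots e_{n-1})$. $L^q$-spectrum: $\tau_\mu(q)=\liminf_{t\to0}\log\sup\sum_i\mu(B(x_i,t))^q/\log t$, the supremum over finite families of pairwise disjoint balls $B(x_i,t)$ with $x_i\in K$. *)

theory Defs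
  imports "HOL-Analysis.Analysis" "HOL-Probability.Probability"
begin

type_synonym aff = "real \<times> real"

definition app :: "aff \<Rightarrow> real \<Rightarrow> real" where
  "app f x = fst f * x + snd f"

definition acomp :: "aff \<Rightarrow> aff \<Rightarrow> aff" where
  "acomp f g = (fst f * fst g, fst f * snd g + snd f)"

definition ainv :: "aff \<Rightarrow> aff" where
  "ainv f = (1 / fst f, - snd f / fst f)"

definition aid :: aff where "aid = (1, 0)"

text \<open>Closed intervals [a,b] (a<b) are represented as pairs (a,b).
  T_J is the orientation preserving affine map sending [0,1] onto J.\<close>

definition Tint :: "real \<times> real \<Rightarrow> aff" where
  "Tint J = (snd J - fst J, fst J)"

definition Sw :: "('i \<Rightarrow> real) \<Rightarrow> ('i \<Rightarrow> real) \<Rightarrow> 'i list \<Rightarrow> aff" where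
  "Sw r d \<sigma> = foldr (\<lambda>i f. acomp (r i, d i) f) \<sigma> aid"

text \<open>An iteration rule assigns to a neighbour set v (a finite set of affine maps; the
  tuple (f_1,...,f_m) in increasing order) and to each of its members f_i the set C_i of words.\<close>

type_synonym 'i itrule = "aff set \<Rightarrow> aff \<Rightarrow> 'i list set"

type_synonym npair = "(real \<times> real) \<times> aff set"

definition raw_children ::
  "('i \<Rightarrow> real) \<Rightarrow> ('i \<Rightarrow> real) \<Rightarrow> real set \<Rightarrow> 'i itrule \<Rightarrow> npair \<Rightarrow> npair set" where
  "raw_children r d K \<Phi> x =
    (let \<Delta> = fst x; v = snd x;
         Y = {acomp (Tint \<Delta>) (acomp f (Sw r d \<tau>)) | f \<tau>. f \<in> v \<and> \<tau> \<in> \<Phi> v f};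
         P = {fst \<Delta>, snd \<Delta>} \<union>
             {app g z | g z. g \<in> Y \<and> z \<in> {0, 1} \<and> app g z \<in> {fst \<Delta>..snd \<Delta>}}
     in {((y, y'), {acomp (ainv (Tint (y, y'))) g | g. g \<in> Y \<and> app g ` K \<inter> {y<..<y'} \<noteq> {}})
         | y y'. y \<in> P \<and> y' \<in> P \<and> y < y' \<and> (\<forall>z\<in>P. \<not> (y < z \<and> z < y')) \<and>
                 {y<..<y'} \<inter> K \<noteq> {}})"

text \<open>Convention: a pair whose only child has the same interval is replaced by that child
  (iterated).\<close>

definition same_step ::
  "('i \<Rightarrow> real) \<Rightarrow> ('i \<Rightarrow> real) \<Rightarrow> real set \<Rightarrow> 'i itrule \<Rightarrow> npair \<Rightarrow> npair \<Rightarrow> bool" where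
  "same_step r d K \<Phi> x y \<longleftrightarrow> raw_children r d K \<Phi> x = {y} \<and> fst y = fst x"

definition stops :: "('i \<Rightarrow> real) \<Rightarrow> ('i \<Rightarrow> real) \<Rightarrow> real set \<Rightarrow> 'i itrule \<Rightarrow> npair \<Rightarrow> bool" where
  "stops r d K \<Phi> x \<longleftrightarrow> \<not> (\<exists>y. same_step r d K \<Phi> x y)"

definition children ::
  "('i \<Rightarrow> real) \<Rightarrow> ('i \<Rightarrow> real) \<Rightarrow> real set \<Rightarrow> 'i itrule \<Rightarrow> npair \<Rightarrow> npair set" where
  "children r d K \<Phi> x =
     \<Union> {raw_children r d K \<Phi> z | z. (same_step r d K \<Phi>)\<^sup>*\<^sup>* x z \<and> stops r d K \<Phi> z}"

definition root_pair :: npair where "root_pair = ((0, 1), {aid})"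

fun netN :: "('i \<Rightarrow> real) \<Rightarrow> ('i \<Rightarrow> real) \<Rightarrow> real set \<Rightarrow> 'i itrule \<Rightarrow> nat \<Rightarrow> npair set" where
  "netN r d K \<Phi> 0 = {root_pair}"
| "netN r d K \<Phi> (Suc n) = \<Union> (children r d K \<Phi> ` netN r d K \<Phi> n)"

definition is_iteration_rule ::
  "'i set \<Rightarrow> ('i \<Rightarrow> real) \<Rightarrow> ('i \<Rightarrow> real) \<Rightarrow> real set \<Rightarrow> 'i itrule \<Rightarrow> bool" where
  "is_iteration_rule I r d K \<Phi> \<longleftrightarrow>
     \<comment> \<open>each C_i is a finite set of words, and for large n every word of length n has a unique prefix in C_i\<close>
     (\<forall>v. finite v \<and> (\<forall>f\<in>v. fst f \<noteq> 0) \<longrightarrow> (\<forall>f\<in>v.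
        finite (\<Phi> v f) \<and> \<Phi> v f \<subseteq> lists I \<and>
        (\<exists>N. \<forall>n\<ge>N. \<forall>w\<in>lists I. length w = n \<longrightarrow> (\<exists>!\<sigma>. \<sigma> \<in> \<Phi> v f \<and> prefix \<sigma> w)))) \<and>
     \<comment> \<open>the convention (replacement of single same-interval children) is well defined\<close>
     (\<forall>n. \<forall>x\<in>netN r d K \<Phi> n. \<exists>z. (same_step r d K \<Phi>)\<^sup>*\<^sup>* x z \<and> stops r d K \<Phi> z) \<and>
     \<comment> \<open>(i): max { |r| diam \<Delta> } over level-n net intervals tends to 0\<close>
     (\<forall>\<epsilon>>0. \<exists>N. \<forall>n\<ge>N. \<forall>x\<in>netN r d K \<Phi> n. \<forall>f\<in>snd x.
        \<bar>fst f\<bar> * (snd (fst x) - fst (fst x)) \<le> \<epsilon>) \<and>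
     \<comment> \<open>(ii)\<close>
     (\<forall>n. \<forall>x\<in>netN r d K \<Phi> n. \<forall>f1\<in>snd x. \<forall>f2\<in>snd x. f1 \<noteq> f2 \<longrightarrow>
        (\<forall>\<sigma>\<in>lists I. acomp f1 (Sw r d \<sigma>) \<noteq> f2))"

type_synonym edge = "aff set \<times> (real \<times> real) \<times> aff set"

definition relpos :: "real \<times> real \<Rightarrow> real \<times> real \<Rightarrow> real \<times> real" where
  "relpos \<Delta> \<Delta>' = ((fst \<Delta>' - fst \<Delta>) / (snd \<Delta> - fst \<Delta>), (snd \<Delta>' - fst \<Delta>) / (snd \<Delta> - fst \<Delta>))"

definition tg_vertices ::
  "('i \<Rightarrow> real) \<Rightarrow> ('i \<Rightarrow> real) \<Rightarrow> real set \<Rightarrow> 'i itrule \<Rightarrow> aff set set" where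
  "tg_vertices r d K \<Phi> = {v. \<exists>n \<Delta>. (\<Delta>, v) \<in> netN r d K \<Phi> n}"

definition tg_edges ::
  "('i \<Rightarrow> real) \<Rightarrow> ('i \<Rightarrow> real) \<Rightarrow> real set \<Rightarrow> 'i itrule \<Rightarrow> edge set" where
  "tg_edges r d K \<Phi> = {(v, relpos \<Delta> \<Delta>', v') | v v' \<Delta> \<Delta>'. \<exists>n. (\<Delta>, v) \<in> netN r d K \<Phi> n \<and>
                                   (\<Delta>', v') \<in> children r d K \<Phi> (\<Delta>, v)}"

definition FNC :: "('i \<Rightarrow> real) \<Rightarrow> ('i \<Rightarrow> real) \<Rightarrow> real set \<Rightarrow> 'i itrule \<Rightarrow> bool" where
  "FNC r d K \<Phi> \<longleftrightarrow> finite (tg_vertices r d K \<Phi>) \<and> finite (tg_edges r d K \<Phi>)"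

definition edge_weight :: "edge \<Rightarrow> real" where
  "edge_weight e = snd (fst (snd e)) - fst (fst (snd e))"

definition path_weight :: "edge list \<Rightarrow> real" where
  "path_weight es = prod_list (map edge_weight es)"

definition rooted_path :: "('i \<Rightarrow> real) \<Rightarrow> ('i \<Rightarrow> real) \<Rightarrow> real set \<Rightarrow> 'i itrule \<Rightarrow> edge list \<Rightarrow> bool" where
  "rooted_path r d K \<Phi> es \<longleftrightarrow>
     set es \<subseteq> tg_edges r d K \<Phi> \<and>
     (es \<noteq> [] \<longrightarrow> fst (hd es) = {aid}) \<and>
     (\<forall>k. Suc k < length es \<longrightarrow> snd (snd (es ! k)) = fst (es ! Suc k))"

text \<open>The net interval pi(eta) reached by following the children along a path.\<close>

definition path_interval :: "edge list \<Rightarrow> real \<times> real" where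
  "path_interval es = foldl (\<lambda>\<Delta> e. (fst \<Delta> + (snd \<Delta> - fst \<Delta>) * fst (fst (snd e)),
                                     fst \<Delta> + (snd \<Delta> - fst \<Delta>) * snd (fst (snd e)))) (0, 1) es"

definition Fset :: "('i \<Rightarrow> real) \<Rightarrow> ('i \<Rightarrow> real) \<Rightarrow> real set \<Rightarrow> 'i itrule \<Rightarrow> real \<Rightarrow> edge list set" where
  "Fset r d K \<Phi> t = {es. rooted_path r d K \<Phi> es \<and> es \<noteq> [] \<and>
                          path_weight es \<le> t \<and> t < path_weight (butlast es)}"

definition Lq_spectrum :: "real measure \<Rightarrow> real set \<Rightarrow> real \<Rightarrow> ereal" where
  "Lq_spectrum \<mu> K q = Liminf (at_right 0) (\<lambda>t. ereal (
     ln (Sup {\<Sum>x\<in>X. measure \<mu> (cball x t) powr q | X.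
               finite X \<and> X \<subseteq> K \<and> pairwise (\<lambda>x y. cball x t \<inter> cball y t = {}) X}) / ln t))"

end

theory Submission
  imports Defs
begin

lemma app_acomp[simp]: "app (acomp f g) x = app f (app g x)"
  by (simp add: app_def acomp_def algebra_simps)
lemma acomp_assoc: "acomp (acomp f g) h = acomp f (acomp g h)"
  by (simp add: acomp_def algebra_simps)
lemma acomp_aid[simp]: "acomp aid f = f" "acomp f aid = f"
  by (auto simp: acomp_def aid_def)
lemma app_aid[simp]: "app aid x = x" by (simp add: app_def aid_def)
lemma fst_acomp[simp]: "fst (acomp f g) = fst f * fst g" by (simp add: acomp_def)
lemma app_Tint: "app (Tint J) x = fst J + (snd J - fst J) * x"
  by (simp add: app_def Tint_def algebra_simps)
lemma fst_Tint[simp]: "fst (Tint J) = snd J - fst J" by (simp add: Tint_def)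
lemma acomp_ainv: "fst f \<noteq> 0 \<Longrightarrow> acomp f (acomp (ainv f) g) = g"
  by (cases f; cases g) (simp add: acomp_def ainv_def field_simps)
lemma ainv_acomp: "fst f \<noteq> 0 \<Longrightarrow> acomp (ainv f) (acomp f g) = g"
  by (cases f; cases g) (simp add: acomp_def ainv_def field_simps)
lemma app_ainv: "fst f \<noteq> 0 \<Longrightarrow> app (ainv f) (app f x) = x"
  by (cases f) (simp add: app_def ainv_def field_simps)
lemma app_ainv2: "fst f \<noteq> 0 \<Longrightarrow> app f (app (ainv f) x) = x"
  by (cases f) (simp add: app_def ainv_def field_simps)

lemma Sw_Nil[simp]: "Sw r d [] = aid" by (simp add: Sw_def)
lemma Sw_Cons[simp]: "Sw r d (i # s) = acomp (r i, d i) (Sw r d s)" by (simp add: Sw_def)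
lemma Sw_append: "Sw r d (s @ t) = acomp (Sw r d s) (Sw r d t)"
  by (induction s) (auto simp: acomp_assoc)
lemma fst_Sw: "fst (Sw r d s) = prod_list (map r s)"
  by (induction s) (auto simp: aid_def)


locale wifs =
  fixes I :: "'i set" and r d p :: "'i \<Rightarrow> real" and K :: "real set"
    and \<mu> :: "real measure" and \<Phi> :: "'i itrule"
  assumes finI: "finite I"
    and rI: "\<forall>i\<in>I. 0 < \<bar>r i\<bar> \<and> \<bar>r i\<bar> < 1"
    and pI: "\<forall>i\<in>I. p i > 0" and psum: "(\<Sum>i\<in>I. p i) = 1"
    and cK: "compact K" and neK: "K \<noteq> {}" and Kss: "K = (\<Union>i\<in>I. (\<lambda>x. r i * x + d i) ` K)"
    and nsing: "\<not> (\<exists>x. K = {x})" and hullK: "convex hull K = {0..1}"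
    and setsM: "sets \<mu> = sets borel" and probM: "prob_space \<mu>"
    and invM: "\<forall>E\<in>sets borel. measure \<mu> E = (\<Sum>i\<in>I. p i * measure \<mu> ((\<lambda>x. r i * x + d i) -` E))"
    and itr: "is_iteration_rule I r d K \<Phi>"
    and fnc: "FNC r d K \<Phi>"
begin

abbreviation S where "S \<equiv> Sw r d"

lemma app_pair: "app (a, b) x = a * x + b" by (simp add: app_def)

lemma Kss': "K = (\<Union>i\<in>I. app (r i, d i) ` K)"
proof -
  have e: "(\<lambda>x. r i * x + d i) = app (r i, d i)" for i by (auto simp: app_pair)
  show ?thesis by (simp only: e[symmetric]) (rule Kss)
qed

lemma Si_K: "i \<in> I \<Longrightarrow> app (r i, d i) ` K \<subseteq> K"
proof -
  assume "i \<in> I"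
  then have "app (r i, d i) ` K \<subseteq> (\<Union>j\<in>I. app (r j, d j) ` K)" by blast
  also have "\<dots> = K" by (rule Kss'[symmetric])
  finally show ?thesis .
qed

lemma K_sub: "K \<subseteq> {0..1}"
proof -
  have "K \<subseteq> convex hull K" by (rule hull_subset)
  then show ?thesis unfolding hullK .
qed

lemma zero_in_K: "0 \<in> K"
proof (rule ccontr)
  assume "0 \<notin> K"
  obtain m where m: "m \<in> K" "\<forall>y\<in>K. m \<le> y"
    using compact_attains_inf[OF cK neK] by blast
  have "m \<in> {0..1}" "m \<noteq> 0" using m K_sub \<open>0 \<notin> K\<close> by auto
  then have "m > 0" by auto
  have "convex hull K \<subseteq> {m..}"
    by (rule hull_minimal) (use m in auto)
  then show False using hullK \<open>m > 0\<close> by auto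
qed

lemma one_in_K: "1 \<in> K"
proof (rule ccontr)
  assume "1 \<notin> K"
  obtain m where m: "m \<in> K" "\<forall>y\<in>K. y \<le> m"
    using compact_attains_sup[OF cK neK] by blast
  have "m \<in> {0..1}" "m \<noteq> 1" using m K_sub \<open>1 \<notin> K\<close> by auto
  then have "m < 1" by auto
  have "convex hull K \<subseteq> {..m}"
    by (rule hull_minimal) (use m in auto)
  then show False using hullK \<open>m < 1\<close> by auto
qed

lemma r_nz: "i \<in> I \<Longrightarrow> r i \<noteq> 0" using rI by force

lemma SK: "\<sigma> \<in> lists I \<Longrightarrow> app (S \<sigma>) ` K \<subseteq> K"
proof (induction \<sigma>)
  case Nil then show ?case by simp
next
  case (Cons i s)
  have "app (S (i # s)) ` K = app (r i, d i) ` (app (S s) ` K)" by (auto simp: image_image)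
  also have "\<dots> \<subseteq> app (r i, d i) ` K" using Cons by auto
  also have "\<dots> \<subseteq> K" using Si_K Cons.prems by auto
  finally show ?case .
qed

lemma fst_S_nz: "\<sigma> \<in> lists I \<Longrightarrow> fst (S \<sigma>) \<noteq> 0"
  by (induction \<sigma>) (auto simp: aid_def r_nz)

lemma K_words: "K = (\<Union>\<sigma>\<in>{\<sigma>. \<sigma> \<in> lists I \<and> length \<sigma> = n}. app (S \<sigma>) ` K)"
proof (induction n)
  case 0 then show ?case by auto
next
  case (Suc n)
  show ?case
  proof
    show "(\<Union>\<sigma>\<in>{\<sigma>. \<sigma> \<in> lists I \<and> length \<sigma> = Suc n}. app (S \<sigma>) ` K) \<subseteq> K"
      using SK by blast
    show "K \<subseteq> (\<Union>\<sigma>\<in>{\<sigma>. \<sigma> \<in> lists I \<and> length \<sigma> = Suc n}. app (S \<sigma>) ` K)"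
    proof
      fix x assume "x \<in> K"
      then obtain i where i: "i \<in> I" "x \<in> app (r i, d i) ` K" using Kss' by blast
      then obtain y where y: "y \<in> K" "x = app (r i, d i) y" by blast
      then obtain \<sigma> where s: "\<sigma> \<in> lists I" "length \<sigma> = n" "y \<in> app (S \<sigma>) ` K"
        using Suc.IH by blast
      then have "x \<in> app (S (i # \<sigma>)) ` K" using y by auto
      then show "x \<in> (\<Union>\<sigma>\<in>{\<sigma>. \<sigma> \<in> lists I \<and> length \<sigma> = Suc n}. app (S \<sigma>) ` K)"
        using s i by (intro UN_I[of "i # \<sigma>"]) auto
    qed
  qed
qed

definition \<rho> where "\<rho> = Max (insert 0 ((\<lambda>i. \<bar>r i\<bar>) ` I))"

lemma rho_ge: "i \<in> I \<Longrightarrow> \<bar>r i\<bar> \<le> \<rho>"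
  unfolding \<rho>_def using finI by (auto intro: Max_ge)

lemma rho_nonneg: "0 \<le> \<rho>"
  unfolding \<rho>_def using finI by (auto intro: Max_ge)

lemma rho_less: "\<rho> < 1"
  unfolding \<rho>_def using finI rI by (subst Max_less_iff) auto

lemma fst_S_le: "\<sigma> \<in> lists I \<Longrightarrow> \<bar>fst (S \<sigma>)\<bar> \<le> \<rho> ^ length \<sigma>"
proof (induction \<sigma>)
  case Nil then show ?case by (simp add: aid_def)
next
  case (Cons i s)
  then have "\<bar>r i\<bar> * \<bar>fst (S s)\<bar> \<le> \<rho> * \<rho> ^ length s"
    using rho_ge rho_nonneg by (intro mult_mono) auto
  then show ?case by (simp add: abs_mult)
qed

lemma app_diff: "app f x - app f y = fst f * (x - y)"
  by (simp add: app_def algebra_simps)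

lemma rho_pow_small: "e > 0 \<Longrightarrow> \<exists>n. \<rho> ^ n < e"
  using real_arch_pow_inv rho_less by blast

lemma S_near:
  assumes "\<sigma> \<in> lists I" "k \<in> K" "z \<in> {0..1}"
  shows "\<bar>app (S \<sigma>) z - app (S \<sigma>) k\<bar> \<le> \<rho> ^ length \<sigma>"
proof -
  have "k \<in> {0..1}" using assms K_sub by auto
  then have "\<bar>z - k\<bar> \<le> 1" using assms(3) by (auto simp: abs_le_iff)
  then have "\<bar>fst (S \<sigma>)\<bar> * \<bar>z - k\<bar> \<le> \<rho> ^ length \<sigma> * 1"
    using fst_S_le[OF assms(1)] by (intro mult_mono) auto
  then show ?thesis by (simp add: app_diff abs_mult)
qed

lemma K_perfect:
  assumes "x \<in> K" "e > 0"
  shows "\<exists>y\<in>K. y \<noteq> x \<and> \<bar>y - x\<bar> < e"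
proof -
  obtain n where n: "\<rho> ^ n < e" using rho_pow_small assms by blast
  obtain \<sigma> where s: "\<sigma> \<in> lists I" "length \<sigma> = n" "x \<in> app (S \<sigma>) ` K"
    using K_words[of n] assms by blast
  then obtain k where k: "k \<in> K" "x = app (S \<sigma>) k" by blast
  have a0: "app (S \<sigma>) 0 \<in> K" "app (S \<sigma>) 1 \<in> K"
    using SK[OF s(1)] zero_in_K one_in_K by auto
  have ne: "app (S \<sigma>) 0 \<noteq> app (S \<sigma>) 1"
    using fst_S_nz[OF s(1)] by (simp add: app_def)
  have d0: "\<bar>app (S \<sigma>) 0 - x\<bar> < e" "\<bar>app (S \<sigma>) 1 - x\<bar> < e"
    using S_near[OF s(1) k(1), of 0] S_near[OF s(1) k(1), of 1] n s(2) k(2) by auto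
  show ?thesis
  proof (cases "app (S \<sigma>) 0 = x")
    case True then show ?thesis using a0 ne d0 by (intro bexI[of _ "app (S \<sigma>) 1"]) auto
  next
    case False then show ?thesis using a0 ne d0 by (intro bexI[of _ "app (S \<sigma>) 0"]) auto
  qed
qed

lemma K_inner: "K \<inter> {0<..<1} \<noteq> {}"
proof -
  obtain y where y: "y \<in> K" "y \<noteq> 0" "\<bar>y - 0\<bar> < 1/2"
    using K_perfect[OF zero_in_K, of "1/2"] by auto
  then have "y \<in> {0<..<1}" using K_sub by auto
  then show ?thesis using y by blast
qed

lemma cover_rule:
  assumes C: "C \<subseteq> lists I"
    and N: "\<forall>n\<ge>N. \<forall>w\<in>lists I. length w = n \<longrightarrow> (\<exists>!\<sigma>. \<sigma> \<in> C \<and> prefix \<sigma> w)"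
  shows "K = (\<Union>\<tau>\<in>C. app (S \<tau>) ` K)"
proof
  show "(\<Union>\<tau>\<in>C. app (S \<tau>) ` K) \<subseteq> K" using SK C by blast
  show "K \<subseteq> (\<Union>\<tau>\<in>C. app (S \<tau>) ` K)"
  proof
    fix x assume "x \<in> K"
    then obtain w where w: "w \<in> lists I" "length w = N" "x \<in> app (S w) ` K"
      using K_words[of N] by blast
    have "\<exists>!\<sigma>. \<sigma> \<in> C \<and> prefix \<sigma> w" using N[rule_format, of N w] w(1,2) by simp
    then obtain \<tau> where t: "\<tau> \<in> C" "prefix \<tau> w" using ex1_implies_ex by blast
    then obtain u where u: "w = \<tau> @ u" by (auto simp: prefix_def)
    have "u \<in> lists I" using w(1) u by auto
    then have "app (S w) ` K \<subseteq> app (S \<tau>) ` K"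
      using SK[of u] u by (auto simp: Sw_append image_image)
    then show "x \<in> (\<Union>\<tau>\<in>C. app (S \<tau>) ` K)" using w t by blast
  qed
qed

end

context wifs begin

lemma M_prob: "prob_space \<mu>" by (rule probM)

lemma M_mono: "A \<subseteq> B \<Longrightarrow> B \<in> sets borel \<Longrightarrow> measure \<mu> A \<le> measure \<mu> B"
  using prob_space.finite_measure[OF probM] finite_measure.finite_measure_mono setsM by metis

lemma M_le1: "measure \<mu> A \<le> 1"
  using prob_space.prob_le_1[OF probM] by metis

lemma M_space: "measure \<mu> UNIV = 1"
proof -
  have "space \<mu> = UNIV" using setsM sets_eq_imp_space_eq by fastforce
  then show ?thesis using prob_space.prob_space[OF probM] by simp
qed

lemma compact_app: "compact A \<Longrightarrow> compact (app f ` A)"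
  by (rule compact_continuous_image) (auto simp: app_def intro!: continuous_intros)

lemma app_inj: "fst f \<noteq> 0 \<Longrightarrow> app f x = app f y \<longleftrightarrow> x = y"
  by (auto simp: app_def)

lemma M_img:
  assumes "compact A" "i \<in> I"
  shows "p i * measure \<mu> A \<le> measure \<mu> (app (r i, d i) ` A)"
proof -
  let ?E = "app (r i, d i) ` A"
  have E: "?E \<in> sets borel" using compact_app[OF assms(1)] by (auto intro: borel_closed compact_imp_closed)
  have pre: "(\<lambda>x. r i * x + d i) -` ?E = A"
    using r_nz[OF assms(2)] by (auto simp: app_pair)
  have "p i * measure \<mu> ((\<lambda>x. r i * x + d i) -` ?E)
      \<le> (\<Sum>j\<in>I. p j * measure \<mu> ((\<lambda>x. r j * x + d j) -` ?E))"
    by (rule member_le_sum) (use assms pI finI in auto)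
  also have "\<dots> = measure \<mu> ?E" using invM E by simp
  finally show ?thesis unfolding pre .
qed

lemma M_word:
  "\<sigma> \<in> lists I \<Longrightarrow> compact A \<Longrightarrow> prod_list (map p \<sigma>) * measure \<mu> A \<le> measure \<mu> (app (S \<sigma>) ` A)"
proof (induction \<sigma>)
  case Nil then show ?case by simp
next
  case (Cons i s)
  have iI: "i \<in> I" and sI: "s \<in> lists I" using Cons.prems by auto
  have eq: "app (S (i # s)) ` A = app (r i, d i) ` (app (S s) ` A)" by (auto simp: image_image)
  have "p i * (prod_list (map p s) * measure \<mu> A) \<le> p i * measure \<mu> (app (S s) ` A)"
    using Cons.IH[OF sI Cons.prems(2)] pI iI by (intro mult_left_mono) auto
  also have "\<dots> \<le> measure \<mu> (app (r i, d i) ` (app (S s) ` A))"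
    by (rule M_img) (use iI compact_app[OF Cons.prems(2)] in auto)
  finally show ?case unfolding eq by (simp add: mult.assoc)
qed

primrec J :: "nat \<Rightarrow> real set \<Rightarrow> real set" where
  "J 0 A = A"
| "J (Suc n) A = (\<Union>i\<in>I. app (r i, d i) ` J n A)"

lemma J_compact: "compact A \<Longrightarrow> compact (J n A)"
  by (induction n) (auto intro!: compact_UN compact_app finI)

lemma J_measure: "compact A \<Longrightarrow> measure \<mu> A \<le> measure \<mu> (J n A)"
proof (induction n)
  case 0 then show ?case by simp
next
  case (Suc n)
  have B: "J (Suc n) A \<in> sets borel"
    using J_compact[OF Suc.prems, of "Suc n"] by (intro borel_closed compact_imp_closed)
  have "measure \<mu> (J n A) = (\<Sum>i\<in>I. p i * measure \<mu> (J n A))"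
    using psum by (simp add: sum_distrib_right[symmetric])
  also have "\<dots> \<le> (\<Sum>i\<in>I. p i * measure \<mu> ((\<lambda>x. r i * x + d i) -` J (Suc n) A))"
  proof (rule sum_mono)
    fix i assume i: "i \<in> I"
    have sub: "J n A \<subseteq> (\<lambda>x. r i * x + d i) -` J (Suc n) A"
      using i by (auto simp: app_pair)
    have "(\<lambda>x. r i * x + d i) -` J (Suc n) A \<in> sets borel"
      using B by (rule measurable_sets_borel[rotated]) (auto intro!: borel_measurable_continuous_onI continuous_intros)
    then show "p i * measure \<mu> (J n A) \<le> p i * measure \<mu> ((\<lambda>x. r i * x + d i) -` J (Suc n) A)"
      using M_mono[OF sub] pI i by (intro mult_left_mono) auto
  qed
  also have "\<dots> = measure \<mu> (J (Suc n) A)" using invM B by simp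
  finally show ?case using Suc by linarith
qed

lemma J_near:
  assumes "\<forall>y\<in>A. \<exists>k\<in>K. \<bar>y - k\<bar> \<le> c"
  shows "\<forall>y\<in>J n A. \<exists>k\<in>K. \<bar>y - k\<bar> \<le> \<rho> ^ n * c"
proof (induction n)
  case 0 then show ?case using assms by simp
next
  case (Suc n)
  show ?case
  proof
    fix y assume "y \<in> J (Suc n) A"
    then obtain i z where iz: "i \<in> I" "z \<in> J n A" "y = app (r i, d i) z" by auto
    then obtain k where k: "k \<in> K" "\<bar>z - k\<bar> \<le> \<rho> ^ n * c" using Suc by blast
    have kk: "app (r i, d i) k \<in> K" using Si_K[OF iz(1)] k(1) by blast
    have "\<bar>y - app (r i, d i) k\<bar> = \<bar>r i\<bar> * \<bar>z - k\<bar>"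
      using iz(3) by (simp add: app_pair abs_mult[symmetric] algebra_simps)
    also have "\<dots> \<le> \<rho> * (\<rho> ^ n * c)"
      using rho_ge[OF iz(1)] k(2) rho_nonneg by (intro mult_mono) auto
    finally show "\<exists>k\<in>K. \<bar>y - k\<bar> \<le> \<rho> ^ Suc n * c" using kk by (auto simp: mult.assoc)
  qed
qed

lemma M_K: "measure \<mu> K = 1"
proof -
  define T where "T m = {y. infdist y K \<le> 1 / (real m + 1)}" for m :: nat
  have Tc: "closed (T m)" for m
    unfolding T_def by (intro closed_Collect_le continuous_intros) auto
  have TB: "T m \<in> sets borel" for m using Tc by (rule borel_closed)
  have TK: "(\<Inter>m. T m) = K"
  proof
    show "K \<subseteq> (\<Inter>m. T m)" unfolding T_def by (auto simp: infdist_zero)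
    show "(\<Inter>m. T m) \<subseteq> K"
    proof
      fix y assume y: "y \<in> (\<Inter>m. T m)"
      have "infdist y K \<le> 0"
      proof (rule field_le_epsilon)
        fix e :: real assume "e > 0"
        obtain m :: nat where "1 / e < m" using reals_Archimedean2 by blast
        then have "1 / (real m + 1) < e" using \<open>e > 0\<close> by (simp add: field_simps)
        moreover have "infdist y K \<le> 1 / (real m + 1)" using y unfolding T_def by auto
        ultimately show "infdist y K \<le> 0 + e" by simp
      qed
      then have "infdist y K = 0" using infdist_nonneg[of y K] by linarith
      then show "y \<in> K" using in_closure_iff_infdist_zero[OF neK] compact_imp_closed[OF cK]
        by (simp add: closure_closed)
    qed
  qed
  have bound: "measure \<mu> (cball 0 (real R)) \<le> measure \<mu> (T m)" for R :: nat and m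
  proof -
    obtain n where n: "\<rho> ^ n * real R < 1 / (real m + 1)"
    proof (cases "R = 0")
      case True then show ?thesis using that[of 0] by simp
    next
      case False
      obtain n where "\<rho> ^ n < 1 / (real m + 1) / real R"
        using rho_pow_small[of "1 / (real m + 1) / real R"] False by auto
      then have "\<rho> ^ n * real R < 1 / (real m + 1) / real R * real R"
        using False by (intro mult_strict_right_mono) auto
      then show ?thesis using that[of n] False by simp
    qed
    have near: "\<forall>y\<in>cball 0 (real R). \<exists>k\<in>K. \<bar>y - k\<bar> \<le> real R"
      using zero_in_K by (auto simp: dist_real_def intro!: bexI[of _ 0])
    have "J n (cball 0 (real R)) \<subseteq> T m"
    proof
      fix y assume "y \<in> J n (cball 0 (real R))"
      then obtain k where k: "k \<in> K" "\<bar>y - k\<bar> \<le> \<rho> ^ n * real R"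
        using J_near[OF near, of n] by blast
      have "infdist y K \<le> dist y k" by (rule infdist_le[OF k(1)])
      then show "y \<in> T m" using k n unfolding T_def by (simp add: dist_real_def)
    qed
    then have "measure \<mu> (J n (cball 0 (real R))) \<le> measure \<mu> (T m)"
      using M_mono TB by blast
    moreover have "measure \<mu> (cball 0 (real R)) \<le> measure \<mu> (J n (cball 0 (real R)))"
      by (rule J_measure) simp
    ultimately show ?thesis by linarith
  qed
  have decT: "decseq T"
    unfolding decseq_def T_def
  proof (intro allI impI subsetI)
    fix m n :: nat and z assume mn: "m \<le> n" and z: "z \<in> {y. infdist y K \<le> 1 / (real n + 1)}"
    have "1 / (real n + 1) \<le> 1 / (real m + 1)" using mn by (intro divide_left_mono) auto
    then show "z \<in> {y. infdist y K \<le> 1 / (real m + 1)}" using z by auto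
  qed
  have limT: "(\<lambda>m. measure \<mu> (T m)) \<longlonglongrightarrow> measure \<mu> K"
    using finite_measure.finite_Lim_measure_decseq[OF prob_space.finite_measure[OF probM], of T]
      TB decT setsM TK by auto
  have incC: "incseq (\<lambda>R::nat. cball (0::real) (real R))"
    unfolding incseq_def by auto
  have unC: "(\<Union>R::nat. cball (0::real) (real R)) = UNIV"
  proof -
    have "x \<in> cball 0 (real (nat \<lceil>\<bar>x\<bar>\<rceil>))" for x :: real
      by (auto simp: dist_real_def)
    then show ?thesis by blast
  qed
  have rC: "range (\<lambda>R::nat. cball (0::real) (real R)) \<subseteq> sets \<mu>" unfolding setsM by auto
  have limC: "(\<lambda>R. measure \<mu> (cball 0 (real R))) \<longlonglongrightarrow> 1"
    using finite_measure.finite_Lim_measure_incseq[OF prob_space.finite_measure[OF probM],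
        of "\<lambda>R::nat. cball (0::real) (real R)", OF rC incC] unfolding unC M_space .
  have "measure \<mu> (cball 0 (real R)) \<le> measure \<mu> K" for R :: nat
    using bound limT by (intro LIMSEQ_le_const) auto
  then have "1 \<le> measure \<mu> K" by (intro LIMSEQ_le_const2[OF limC]) auto
  then show ?thesis using M_le1[of K] by linarith
qed

lemma M_01: "measure \<mu> {0..1} = 1"
  using M_mono[OF K_sub] M_K M_le1[of "{0..1}"] by auto

lemma M_pos:
  assumes "x \<in> K" "\<delta> > 0"
  shows "measure \<mu> (cball x \<delta>) > 0"
proof -
  obtain n where n: "\<rho> ^ n < \<delta>" using rho_pow_small assms by blast
  obtain \<sigma> where s: "\<sigma> \<in> lists I" "length \<sigma> = n" "x \<in> app (S \<sigma>) ` K"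
    using K_words[of n] assms by blast
  then obtain k where k: "k \<in> K" "x = app (S \<sigma>) k" by blast
  have sub: "app (S \<sigma>) ` {0..1} \<subseteq> cball x \<delta>"
  proof
    fix y assume "y \<in> app (S \<sigma>) ` {0..1}"
    then obtain z where "z \<in> {0..1}" "y = app (S \<sigma>) z" by blast
    then show "y \<in> cball x \<delta>" using S_near[OF s(1) k(1), of z] k(2) n s(2)
      by (auto simp: dist_real_def abs_minus_commute)
  qed
  have pp: "prod_list (map p \<sigma>) > 0" using s(1) pI
    by (induction \<sigma>) auto
  have "prod_list (map p \<sigma>) * measure \<mu> {0..1} \<le> measure \<mu> (app (S \<sigma>) ` {0..1})"
    by (rule M_word[OF s(1)]) auto
  also have "\<dots> \<le> measure \<mu> (cball x \<delta>)" using M_mono[OF sub] by simp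
  finally show ?thesis using pp M_01 by simp
qed

end

lemma app_Tint_less: "fst \<Delta> < snd \<Delta> \<Longrightarrow> app (Tint \<Delta>) x < app (Tint \<Delta>) y \<longleftrightarrow> x < y"
  by (simp add: app_Tint)
lemma app_Tint_le: "fst \<Delta> < snd \<Delta> \<Longrightarrow> app (Tint \<Delta>) x \<le> app (Tint \<Delta>) y \<longleftrightarrow> x \<le> y"
  by (simp add: app_Tint)
lemma app_Tint_eq: "fst \<Delta> < snd \<Delta> \<Longrightarrow> app (Tint \<Delta>) x = app (Tint \<Delta>) y \<longleftrightarrow> x = y"
  by (simp add: app_Tint)
lemma app_Tint_0[simp]: "app (Tint \<Delta>) 0 = fst \<Delta>" by (simp add: app_Tint)
lemma app_Tint_1[simp]: "app (Tint \<Delta>) 1 = snd \<Delta>" by (simp add: app_Tint)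

lemma Tint_sub: "Tint (app (Tint \<Delta>) u, app (Tint \<Delta>) u') = acomp (Tint \<Delta>) (Tint (u, u'))"
  by (simp add: Tint_def acomp_def app_def algebra_simps)

lemma ainv_comp_gen:
  assumes "fst T \<noteq> 0" "fst X \<noteq> 0"
  shows "acomp (ainv (acomp T X)) (acomp T g) = acomp (ainv X) g"
  using assms by (cases T; cases X; cases g) (simp add: acomp_def ainv_def field_simps)

lemma W_ident:
  assumes "fst \<Delta> < snd \<Delta>" "u < u'"
  shows "acomp (ainv (Tint (app (Tint \<Delta>) u, app (Tint \<Delta>) u'))) (acomp (Tint \<Delta>) g)
       = acomp (ainv (Tint (u, u'))) g"
  unfolding Tint_sub using assms by (intro ainv_comp_gen) (auto simp: Tint_def)

lemma cond_transport:
  assumes "fst \<Delta> < snd \<Delta>"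
  shows "app (acomp (Tint \<Delta>) g) ` A \<inter> {app (Tint \<Delta>) u<..<app (Tint \<Delta>) u'} \<noteq> {}
     \<longleftrightarrow> app g ` A \<inter> {u<..<u'} \<noteq> {}"
  using app_Tint_less[OF assms] by auto

lemma set_transport:
  assumes "\<And>y y'. Qr y y' \<Longrightarrow> \<exists>u u'. y = h u \<and> y' = h u'"
    and "\<And>u u'. Qr (h u) (h u') \<longleftrightarrow> Q u u'"
    and "\<And>u u'. Q u u' \<Longrightarrow> Wr (h u) (h u') = W u u'"
  shows "{((y, y'), Wr y y') | y y'. Qr y y'} =
         (\<lambda>((u, u'), w). ((h u, h u'), w)) ` {((u, u'), W u u') | u u'. Q u u'}"
proof
  show "{((y, y'), Wr y y') | y y'. Qr y y'} \<subseteq> (\<lambda>((u, u'), w). ((h u, h u'), w)) ` {((u, u'), W u u') | u u'. Q u u'}"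
  proof
    fix x assume "x \<in> {((y, y'), Wr y y') | y y'. Qr y y'}"
    then obtain y y' where x: "x = ((y, y'), Wr y y')" "Qr y y'" by blast
    then obtain u u' where uu: "y = h u" "y' = h u'" using assms(1) by blast
    have Q: "Q u u'" using x(2) uu assms(2) by blast
    have "x = (\<lambda>((u, u'), w). ((h u, h u'), w)) ((u, u'), W u u')" using x uu assms(3)[OF Q] by simp
    then show "x \<in> (\<lambda>((u, u'), w). ((h u, h u'), w)) ` {((u, u'), W u u') | u u'. Q u u'}"
      using Q by blast
  qed
  show "(\<lambda>((u, u'), w). ((h u, h u'), w)) ` {((u, u'), W u u') | u u'. Q u u'} \<subseteq> {((y, y'), Wr y y') | y y'. Qr y y'}"
  proof
    fix x assume "x \<in> (\<lambda>((u, u'), w). ((h u, h u'), w)) ` {((u, u'), W u u') | u u'. Q u u'}"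
    then obtain u u' where x: "x = ((h u, h u'), W u u')" "Q u u'" by auto
    then have "x = ((h u, h u'), Wr (h u) (h u'))" "Qr (h u) (h u')" using assms(2,3) by auto
    then show "x \<in> {((y, y'), Wr y y') | y y'. Qr y y'}" by blast
  qed
qed

context wifs begin

definition Inv :: "npair \<Rightarrow> bool" where
  "Inv x \<longleftrightarrow> fst (fst x) < snd (fst x) \<and> finite (snd x) \<and>
     (\<forall>f\<in>snd x. \<exists>\<sigma>\<in>lists I. acomp (Tint (fst x)) f = S \<sigma>) \<and>
     K \<inter> {fst (fst x)<..<snd (fst x)} \<subseteq> (\<Union>f\<in>snd x. app (acomp (Tint (fst x)) f) ` K) \<and>
     K \<inter> {fst (fst x)<..<snd (fst x)} \<noteq> {}"

definition Y0 :: "aff set \<Rightarrow> aff set" where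
  "Y0 v = {acomp f (S \<tau>) | f \<tau>. f \<in> v \<and> \<tau> \<in> \<Phi> v f}"

definition P0 :: "aff set \<Rightarrow> real set" where
  "P0 v = {0, 1} \<union> {app g z | g z. g \<in> Y0 v \<and> z \<in> {0, 1} \<and> app g z \<in> {0..1}}"

definition Qn :: "aff set \<Rightarrow> real \<Rightarrow> real \<Rightarrow> bool" where
  "Qn v u u' \<longleftrightarrow> u \<in> P0 v \<and> u' \<in> P0 v \<and> u < u' \<and> (\<forall>z\<in>P0 v. \<not> (u < z \<and> z < u')) \<and>
     (\<exists>g\<in>Y0 v. app g ` K \<inter> {u<..<u'} \<noteq> {})"

definition Wn :: "aff set \<Rightarrow> real \<Rightarrow> real \<Rightarrow> aff set" where
  "Wn v u u' = {acomp (ainv (Tint (u, u'))) g | g. g \<in> Y0 v \<and> app g ` K \<inter> {u<..<u'} \<noteq> {}}"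

definition ncs :: "aff set \<Rightarrow> npair set" where
  "ncs v = {((u, u'), Wn v u u') | u u'. Qn v u u'}"

definition tr :: "real \<times> real \<Rightarrow> npair \<Rightarrow> npair" where
  "tr \<Delta> = (\<lambda>((u, u'), w). ((app (Tint \<Delta>) u, app (Tint \<Delta>) u'), w))"

lemma Inv_D:
  assumes "Inv (\<Delta>, v)"
  shows "fst \<Delta> < snd \<Delta>" "finite v" "\<And>f. f \<in> v \<Longrightarrow> \<exists>\<sigma>\<in>lists I. acomp (Tint \<Delta>) f = S \<sigma>"
    "K \<inter> {fst \<Delta><..<snd \<Delta>} \<subseteq> (\<Union>f\<in>v. app (acomp (Tint \<Delta>) f) ` K)"
    "K \<inter> {fst \<Delta><..<snd \<Delta>} \<noteq> {}"
  using assms unfolding Inv_def by auto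

lemma Inv_fst_nz:
  assumes "Inv (\<Delta>, v)" "f \<in> v"
  shows "fst f \<noteq> 0"
proof -
  obtain \<sigma> where s: "\<sigma> \<in> lists I" "acomp (Tint \<Delta>) f = S \<sigma>" using Inv_D(3)[OF assms] by blast
  have "fst (acomp (Tint \<Delta>) f) \<noteq> 0" using s fst_S_nz by simp
  then show ?thesis by simp
qed

lemma Phi_props:
  assumes "finite v" "\<forall>f\<in>v. fst f \<noteq> 0" "f \<in> v"
  shows "finite (\<Phi> v f)" "\<Phi> v f \<subseteq> lists I" "K = (\<Union>\<tau>\<in>\<Phi> v f. app (S \<tau>) ` K)"
proof -
  have A: "finite (\<Phi> v f) \<and> \<Phi> v f \<subseteq> lists I \<and>
        (\<exists>N. \<forall>n\<ge>N. \<forall>w\<in>lists I. length w = n \<longrightarrow> (\<exists>!\<sigma>. \<sigma> \<in> \<Phi> v f \<and> prefix \<sigma> w))"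
  proof -
    have itr1: "\<forall>v. finite v \<and> (\<forall>f\<in>v. fst f \<noteq> 0) \<longrightarrow> (\<forall>f\<in>v.
        finite (\<Phi> v f) \<and> \<Phi> v f \<subseteq> lists I \<and>
        (\<exists>N. \<forall>n\<ge>N. \<forall>w\<in>lists I. length w = n \<longrightarrow> (\<exists>!\<sigma>. \<sigma> \<in> \<Phi> v f \<and> prefix \<sigma> w)))"
      using itr[unfolded is_iteration_rule_def] by (rule conjunct1)
    show ?thesis using itr1[rule_format, OF conjI[OF assms(1) assms(2)] assms(3)] .
  qed
  show "finite (\<Phi> v f)" using A by (rule conjunct1)
  have A2: "\<Phi> v f \<subseteq> lists I" using A[THEN conjunct2] by (rule conjunct1)
  then show "\<Phi> v f \<subseteq> lists I" .
  obtain N where N: "\<forall>n\<ge>N. \<forall>w\<in>lists I. length w = n \<longrightarrow> (\<exists>!\<sigma>. \<sigma> \<in> \<Phi> v f \<and> prefix \<sigma> w)"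
    using A[THEN conjunct2, THEN conjunct2] by (rule exE)
  show "K = (\<Union>\<tau>\<in>\<Phi> v f. app (S \<tau>) ` K)" by (rule cover_rule[OF A2 N])
qed

lemma Inv_Phi:
  assumes "Inv (\<Delta>, v)" "f \<in> v"
  shows "finite (\<Phi> v f)" "\<Phi> v f \<subseteq> lists I" "K = (\<Union>\<tau>\<in>\<Phi> v f. app (S \<tau>) ` K)"
  using Phi_props[OF Inv_D(2)[OF assms(1)] _ assms(2)] Inv_fst_nz[OF assms(1)] by auto

lemma Y0_finite: "Inv (\<Delta>, v) \<Longrightarrow> finite (Y0 v)"
proof -
  assume inv: "Inv (\<Delta>, v)"
  have "Y0 v = (\<Union>f\<in>v. (\<lambda>\<tau>. acomp f (S \<tau>)) ` \<Phi> v f)" unfolding Y0_def by auto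
  then show ?thesis using Inv_D(2)[OF inv] Inv_Phi(1)[OF inv] by auto
qed

lemma Y0_S:
  assumes "Inv (\<Delta>, v)" "g \<in> Y0 v"
  shows "\<exists>\<sigma>\<in>lists I. acomp (Tint \<Delta>) g = S \<sigma>"
proof -
  obtain f \<tau> where g: "g = acomp f (S \<tau>)" "f \<in> v" "\<tau> \<in> \<Phi> v f" using assms(2) unfolding Y0_def by blast
  obtain \<sigma> where s: "\<sigma> \<in> lists I" "acomp (Tint \<Delta>) f = S \<sigma>" using Inv_D(3)[OF assms(1) g(2)] by blast
  have t: "\<tau> \<in> lists I" using Inv_Phi(2)[OF assms(1) g(2)] g(3) by blast
  have "acomp (Tint \<Delta>) g = S (\<sigma> @ \<tau>)" using g s by (simp add: Sw_append acomp_assoc[symmetric])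
  moreover have "\<sigma> @ \<tau> \<in> lists I" using s t by simp
  ultimately show ?thesis by blast
qed

lemma Y0_K: "Inv (\<Delta>, v) \<Longrightarrow> g \<in> Y0 v \<Longrightarrow> app (acomp (Tint \<Delta>) g) ` K \<subseteq> K"
  using Y0_S SK by metis

lemma KY:
  assumes "Inv (\<Delta>, v)"
  shows "K \<inter> {fst \<Delta><..<snd \<Delta>} \<subseteq> (\<Union>g\<in>Y0 v. app (acomp (Tint \<Delta>) g) ` K)"
proof
  fix x assume x: "x \<in> K \<inter> {fst \<Delta><..<snd \<Delta>}"
  then obtain f k where f: "f \<in> v" "k \<in> K" "x = app (acomp (Tint \<Delta>) f) k"
    using Inv_D(4)[OF assms] by blast
  then obtain \<tau> k' where t: "\<tau> \<in> \<Phi> v f" "k' \<in> K" "k = app (S \<tau>) k'"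
    using Inv_Phi(3)[OF assms f(1)] by blast
  have "acomp f (S \<tau>) \<in> Y0 v" using f t unfolding Y0_def by blast
  moreover have "x = app (acomp (Tint \<Delta>) (acomp f (S \<tau>))) k'" using f t by simp
  ultimately show "x \<in> (\<Union>g\<in>Y0 v. app (acomp (Tint \<Delta>) g) ` K)" using t by blast
qed

lemma P0_sub: "P0 v \<subseteq> {0..1}"
  unfolding P0_def by auto

lemma Kcond:
  assumes "Inv (\<Delta>, v)" "0 \<le> u" "u' \<le> 1"
  shows "{app (Tint \<Delta>) u<..<app (Tint \<Delta>) u'} \<inter> K \<noteq> {} \<longleftrightarrow> (\<exists>g\<in>Y0 v. app g ` K \<inter> {u<..<u'} \<noteq> {})"
proof
  have ab: "fst \<Delta> < snd \<Delta>" using Inv_D(1)[OF assms(1)] .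
  assume "{app (Tint \<Delta>) u<..<app (Tint \<Delta>) u'} \<inter> K \<noteq> {}"
  then obtain x where x: "x \<in> K" "app (Tint \<Delta>) u < x" "x < app (Tint \<Delta>) u'" by auto
  have "fst \<Delta> \<le> app (Tint \<Delta>) u" "app (Tint \<Delta>) u' \<le> snd \<Delta>"
    using app_Tint_le[OF ab, of 0 u] app_Tint_le[OF ab, of u' 1] assms(2,3) by auto
  then have "x \<in> K \<inter> {fst \<Delta><..<snd \<Delta>}" using x by auto
  then obtain g k where g: "g \<in> Y0 v" "k \<in> K" "x = app (acomp (Tint \<Delta>) g) k" using KY[OF assms(1)] by blast
  then have "app g k \<in> {u<..<u'}" using x app_Tint_less[OF ab] by auto
  then show "\<exists>g\<in>Y0 v. app g ` K \<inter> {u<..<u'} \<noteq> {}" using g by blast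
next
  have ab: "fst \<Delta> < snd \<Delta>" using Inv_D(1)[OF assms(1)] .
  assume "\<exists>g\<in>Y0 v. app g ` K \<inter> {u<..<u'} \<noteq> {}"
  then obtain g k where g: "g \<in> Y0 v" "k \<in> K" "app g k \<in> {u<..<u'}" by blast
  have "app (acomp (Tint \<Delta>) g) k \<in> K" using Y0_K[OF assms(1) g(1)] g(2) by blast
  moreover have "app (acomp (Tint \<Delta>) g) k \<in> {app (Tint \<Delta>) u<..<app (Tint \<Delta>) u'}"
    using g(3) app_Tint_less[OF ab] by auto
  ultimately show "{app (Tint \<Delta>) u<..<app (Tint \<Delta>) u'} \<inter> K \<noteq> {}" by blast
qed

lemma RC:
  assumes inv: "Inv (\<Delta>, v)"
  shows "raw_children r d K \<Phi> (\<Delta>, v) = tr \<Delta> ` ncs v"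
proof -
  define T where "T = Tint \<Delta>"
  define h where "h = app T"
  have ab: "fst \<Delta> < snd \<Delta>" using Inv_D(1)[OF inv] .
  have hl: "h x < h y \<longleftrightarrow> x < y" for x y unfolding h_def T_def using app_Tint_less[OF ab] .
  have hle: "h x \<le> h y \<longleftrightarrow> x \<le> y" for x y unfolding h_def T_def using app_Tint_le[OF ab] .
  have Yeq: "{acomp T (acomp f (S \<tau>)) | f \<tau>. f \<in> v \<and> \<tau> \<in> \<Phi> v f} = acomp T ` Y0 v"
    unfolding Y0_def by blast
  have Peq: "{fst \<Delta>, snd \<Delta>} \<union> {app g z | g z. g \<in> acomp T ` Y0 v \<and> z \<in> {0, 1} \<and> app g z \<in> {fst \<Delta>..snd \<Delta>}}
      = h ` P0 v"
  proof -
    have iff: "app (acomp T g) z \<in> {fst \<Delta>..snd \<Delta>} \<longleftrightarrow> app g z \<in> {0..1}" for g z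
      using hle[of 0 "app g z"] hle[of "app g z" 1] unfolding h_def T_def by auto
    have h0: "h 0 = fst \<Delta>" and h1: "h 1 = snd \<Delta>" unfolding h_def T_def by auto
    have hg: "app (acomp T g) z = h (app g z)" for g z unfolding h_def by simp
    show ?thesis
    proof
      show "{fst \<Delta>, snd \<Delta>} \<union> {app g z | g z. g \<in> acomp T ` Y0 v \<and> z \<in> {0, 1} \<and> app g z \<in> {fst \<Delta>..snd \<Delta>}} \<subseteq> h ` P0 v"
      proof
        fix x assume "x \<in> {fst \<Delta>, snd \<Delta>} \<union> {app g z | g z. g \<in> acomp T ` Y0 v \<and> z \<in> {0, 1} \<and> app g z \<in> {fst \<Delta>..snd \<Delta>}}"
        then consider "x = fst \<Delta>" | "x = snd \<Delta>" | g0 z where "g0 \<in> Y0 v" "z \<in> {0,1}" "x = app (acomp T g0) z" "app (acomp T g0) z \<in> {fst \<Delta>..snd \<Delta>}"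
          by blast
        then show "x \<in> h ` P0 v"
        proof cases
          case 1
          have "(0::real) \<in> P0 v" unfolding P0_def by blast
          then show ?thesis using 1 h0 by (metis image_eqI)
        next
          case 2
          have "(1::real) \<in> P0 v" unfolding P0_def by blast
          then show ?thesis using 2 h1 by (metis image_eqI)
        next
          case 3
          then have "app g0 z \<in> P0 v" unfolding P0_def using iff by blast
          then show ?thesis using 3 hg by blast
        qed
      qed
      show "h ` P0 v \<subseteq> {fst \<Delta>, snd \<Delta>} \<union> {app g z | g z. g \<in> acomp T ` Y0 v \<and> z \<in> {0, 1} \<and> app g z \<in> {fst \<Delta>..snd \<Delta>}}"
      proof
        fix x assume "x \<in> h ` P0 v"
        then obtain y where y: "y \<in> P0 v" "x = h y" by blast
        then consider "y = 0" | "y = 1" | g0 z where "g0 \<in> Y0 v" "z \<in> {0,1}" "y = app g0 z" "app g0 z \<in> {0..1}"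
          unfolding P0_def by blast
        then show "x \<in> {fst \<Delta>, snd \<Delta>} \<union> {app g z | g z. g \<in> acomp T ` Y0 v \<and> z \<in> {0, 1} \<and> app g z \<in> {fst \<Delta>..snd \<Delta>}}"
        proof cases
          case 1 then show ?thesis using y h0 by blast
        next
          case 2 then show ?thesis using y h1 by blast
        next
          case 3
          then have "x = app (acomp T g0) z" "app (acomp T g0) z \<in> {fst \<Delta>..snd \<Delta>}" using y hg iff by auto
          then show ?thesis using 3 by blast
        qed
      qed
    qed
  qed
  have main: "{((y, y'), {acomp (ainv (Tint (y, y'))) g | g. g \<in> acomp T ` Y0 v \<and> app g ` K \<inter> {y<..<y'} \<noteq> {}})
         | y y'. y \<in> h ` P0 v \<and> y' \<in> h ` P0 v \<and> y < y' \<and> (\<forall>z\<in>h ` P0 v. \<not> (y < z \<and> z < y')) \<and>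
                 {y<..<y'} \<inter> K \<noteq> {}} = (\<lambda>((u, u'), w). ((h u, h u'), w)) ` {((u, u'), Wn v u u') | u u'. Qn v u u'}"
  proof (rule set_transport)
    fix y y'
    assume "y \<in> h ` P0 v \<and> y' \<in> h ` P0 v \<and> y < y' \<and> (\<forall>z\<in>h ` P0 v. \<not> (y < z \<and> z < y')) \<and> {y<..<y'} \<inter> K \<noteq> {}"
    then show "\<exists>u u'. y = h u \<and> y' = h u'" by blast
  next
    fix u u'
    have inj: "h x = h y \<longleftrightarrow> x = y" for x y using hle[of x y] hle[of y x] by auto
    have memb: "h x \<in> h ` P0 v \<longleftrightarrow> x \<in> P0 v" for x using inj by auto
    have btw: "(\<forall>z\<in>h ` P0 v. \<not> (h u < z \<and> z < h u')) \<longleftrightarrow> (\<forall>z\<in>P0 v. \<not> (u < z \<and> z < u'))"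
      using hl by auto
    show "(h u \<in> h ` P0 v \<and> h u' \<in> h ` P0 v \<and> h u < h u' \<and> (\<forall>z\<in>h ` P0 v. \<not> (h u < z \<and> z < h u')) \<and>
           {h u<..<h u'} \<inter> K \<noteq> {}) \<longleftrightarrow> Qn v u u'"
    proof
      assume A: "h u \<in> h ` P0 v \<and> h u' \<in> h ` P0 v \<and> h u < h u' \<and> (\<forall>z\<in>h ` P0 v. \<not> (h u < z \<and> z < h u')) \<and>
           {h u<..<h u'} \<inter> K \<noteq> {}"
      then have uP: "u \<in> P0 v" "u' \<in> P0 v" using memb by auto
      have u0: "0 \<le> u" using uP(1) P0_sub[of v] by fastforce
      have u1: "u' \<le> 1" using uP(2) P0_sub[of v] by fastforce
      then show "Qn v u u'" using A uP Kcond[OF inv u0 u1] hl btw unfolding Qn_def h_def T_def by auto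
    next
      assume Q: "Qn v u u'"
      then have uP: "u \<in> P0 v" "u' \<in> P0 v" unfolding Qn_def by auto
      have u0: "0 \<le> u" using uP(1) P0_sub[of v] by fastforce
      have u1: "u' \<le> 1" using uP(2) P0_sub[of v] by fastforce
      then show "h u \<in> h ` P0 v \<and> h u' \<in> h ` P0 v \<and> h u < h u' \<and> (\<forall>z\<in>h ` P0 v. \<not> (h u < z \<and> z < h u')) \<and>
           {h u<..<h u'} \<inter> K \<noteq> {}"
        using Q uP Kcond[OF inv u0 u1] hl btw unfolding Qn_def h_def T_def by auto
    qed
  next
    fix u u' assume Q: "Qn v u u'"
    then have uu: "u < u'" unfolding Qn_def by auto
    show "{acomp (ainv (Tint (h u, h u'))) g | g. g \<in> acomp T ` Y0 v \<and> app g ` K \<inter> {h u<..<h u'} \<noteq> {}} = Wn v u u'"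
    proof (unfold Wn_def, intro set_eqI iffI)
      fix x assume "x \<in> {acomp (ainv (Tint (h u, h u'))) g | g. g \<in> acomp T ` Y0 v \<and> app g ` K \<inter> {h u<..<h u'} \<noteq> {}}"
      then obtain g where g: "g \<in> acomp T ` Y0 v" "app g ` K \<inter> {h u<..<h u'} \<noteq> {}"
        "x = acomp (ainv (Tint (h u, h u'))) g" by blast
      then obtain g0 where g0: "g0 \<in> Y0 v" "g = acomp T g0" by blast
      have "x = acomp (ainv (Tint (u, u'))) g0" using g(3) g0(2) W_ident[OF ab uu] unfolding h_def T_def by simp
      moreover have "app g0 ` K \<inter> {u<..<u'} \<noteq> {}" using g(2) g0(2) cond_transport[OF ab] unfolding h_def T_def by simp
      ultimately show "x \<in> {acomp (ainv (Tint (u, u'))) g | g. g \<in> Y0 v \<and> app g ` K \<inter> {u<..<u'} \<noteq> {}}"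
        using g0(1) by blast
    next
      fix x assume "x \<in> {acomp (ainv (Tint (u, u'))) g | g. g \<in> Y0 v \<and> app g ` K \<inter> {u<..<u'} \<noteq> {}}"
      then obtain g0 where g0: "g0 \<in> Y0 v" "app g0 ` K \<inter> {u<..<u'} \<noteq> {}" "x = acomp (ainv (Tint (u, u'))) g0" by blast
      have "x = acomp (ainv (Tint (h u, h u'))) (acomp T g0)" using g0(3) W_ident[OF ab uu] unfolding h_def T_def by simp
      moreover have "app (acomp T g0) ` K \<inter> {h u<..<h u'} \<noteq> {}" using g0(2) cond_transport[OF ab] unfolding h_def T_def by simp
      moreover have "acomp T g0 \<in> acomp T ` Y0 v" using g0(1) by blast
      ultimately show "x \<in> {acomp (ainv (Tint (h u, h u'))) g | g. g \<in> acomp T ` Y0 v \<and> app g ` K \<inter> {h u<..<h u'} \<noteq> {}}"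
        by blast
    qed
  qed
  have trq: "tr \<Delta> ` ncs v = (\<lambda>((u, u'), w). ((h u, h u'), w)) ` {((u, u'), Wn v u u') | u u'. Qn v u u'}"
    unfolding tr_def ncs_def h_def T_def ..
  show ?thesis
    unfolding raw_children_def Let_def fst_conv snd_conv Yeq[unfolded T_def] Peq[unfolded T_def] trq
    by (rule main[unfolded T_def])
qed

end

context wifs begin

lemma tr_simp: "tr \<Delta> ((u, u'), w) = ((app (Tint \<Delta>) u, app (Tint \<Delta>) u'), w)"
  by (simp add: tr_def)

lemma tr_01: "tr \<Delta> ((0, 1), w) = (\<Delta>, w)"
  by (simp add: tr_def)

lemma tr_inj: "fst \<Delta> < snd \<Delta> \<Longrightarrow> tr \<Delta> x = tr \<Delta> y \<longleftrightarrow> x = y"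
  by (cases x; cases y) (auto simp: tr_def app_Tint_eq)

lemma relpos_tr: "fst \<Delta> < snd \<Delta> \<Longrightarrow> relpos \<Delta> (app (Tint \<Delta>) u, app (Tint \<Delta>) u') = (u, u')"
  by (simp add: relpos_def app_Tint)

lemma ncs_D: "((u, u'), w) \<in> ncs v \<Longrightarrow> Qn v u u' \<and> w = Wn v u u'"
  unfolding ncs_def by blast

lemma ncs_N1: "((u, u'), w) \<in> ncs v \<Longrightarrow> 0 \<le> u \<and> u < u' \<and> u' \<le> 1"
  using ncs_D[of u u' w v] P0_sub[of v] unfolding Qn_def by fastforce

lemma ncs_N2:
  assumes "((u1, u1'), w1) \<in> ncs v" "((u2, u2'), w2) \<in> ncs v"
    and "{u1<..<u1'} \<inter> {u2<..<u2'} \<noteq> {}"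
  shows "u1 = u2 \<and> u1' = u2' \<and> w1 = w2"
proof -
  have Q1: "Qn v u1 u1'" "w1 = Wn v u1 u1'" and Q2: "Qn v u2 u2'" "w2 = Wn v u2 u2'"
    using ncs_D assms(1,2) by blast+
  obtain x where "x \<in> {u1<..<u1'} \<inter> {u2<..<u2'}" using assms(3) by blast
  then have x: "u1 < x" "x < u1'" "u2 < x" "x < u2'" by auto
  have "\<not> (u1 < u2)"
  proof
    assume "u1 < u2"
    moreover have "u2 < u1'" using x by auto
    ultimately show False using Q1(1) Q2(1) unfolding Qn_def by blast
  qed
  moreover have "\<not> (u2 < u1)"
  proof
    assume "u2 < u1"
    moreover have "u1 < u2'" using x by auto
    ultimately show False using Q1(1) Q2(1) unfolding Qn_def by blast
  qed
  moreover have "\<not> (u1' < u2')"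
  proof
    assume "u1' < u2'"
    moreover have "u2 < u1'" using x by auto
    ultimately show False using Q1(1) Q2(1) unfolding Qn_def by blast
  qed
  moreover have "\<not> (u2' < u1')"
  proof
    assume "u2' < u1'"
    moreover have "u1 < u2'" using x by auto
    ultimately show False using Q1(1) Q2(1) unfolding Qn_def by blast
  qed
  ultimately have "u1 = u2" "u1' = u2'" by auto
  then show ?thesis using Q1 Q2 by simp
qed

lemma Inv_child:
  assumes inv: "Inv (\<Delta>, v)" and n: "((u, u'), w) \<in> ncs v"
  shows "Inv (tr \<Delta> ((u, u'), w))"
proof -
  define T where "T = Tint \<Delta>"
  define h where "h = app T"
  have ab: "fst \<Delta> < snd \<Delta>" using Inv_D(1)[OF inv] .
  have hl: "h x < h y \<longleftrightarrow> x < y" for x y unfolding h_def T_def using app_Tint_less[OF ab] .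
  have Q: "Qn v u u'" and w: "w = Wn v u u'" using ncs_D[OF n] by auto
  have N1: "0 \<le> u" "u < u'" "u' \<le> 1" using ncs_N1[OF n] by auto
  have tre: "tr \<Delta> ((u, u'), w) = ((h u, h u'), w)" unfolding h_def T_def by (simp add: tr_def)
  have TT: "Tint (h u, h u') = acomp T (Tint (u, u'))" unfolding h_def T_def by (rule Tint_sub)
  have Xnz: "fst (Tint (u, u')) \<noteq> 0" using N1 by simp
  have i1: "h u < h u'" using hl N1 by auto
  have i2: "finite w"
  proof -
    have "w \<subseteq> (\<lambda>g. acomp (ainv (Tint (u, u'))) g) ` Y0 v" unfolding w Wn_def by blast
    then show ?thesis using Y0_finite[OF inv] finite_surj by blast
  qed
  have i3: "\<forall>f\<in>w. \<exists>\<sigma>\<in>lists I. acomp (Tint (h u, h u')) f = S \<sigma>"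
  proof
    fix f assume "f \<in> w"
    then obtain g where g: "g \<in> Y0 v" "f = acomp (ainv (Tint (u, u'))) g" unfolding w Wn_def by blast
    have "acomp (Tint (h u, h u')) f = acomp T g"
      unfolding TT g(2) acomp_assoc using acomp_ainv[OF Xnz] by simp
    then show "\<exists>\<sigma>\<in>lists I. acomp (Tint (h u, h u')) f = S \<sigma>"
      using Y0_S[OF inv g(1)] unfolding T_def by simp
  qed
  have i4: "K \<inter> {h u<..<h u'} \<subseteq> (\<Union>f\<in>w. app (acomp (Tint (h u, h u')) f) ` K)"
  proof
    fix x assume x: "x \<in> K \<inter> {h u<..<h u'}"
    have "fst \<Delta> \<le> h u" "h u' \<le> snd \<Delta>"
      using app_Tint_le[OF ab, of 0 u] app_Tint_le[OF ab, of u' 1] N1 unfolding h_def T_def by auto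
    then have "x \<in> K \<inter> {fst \<Delta><..<snd \<Delta>}" using x by auto
    then obtain g k where g: "g \<in> Y0 v" "k \<in> K" "x = app (acomp T g) k"
      using KY[OF inv] unfolding T_def by blast
    have x2: "x = h (app g k)" using g(3) unfolding h_def by simp
    then have "app g k \<in> {u<..<u'}" using x hl by auto
    then have gw: "acomp (ainv (Tint (u, u'))) g \<in> w" using g unfolding w Wn_def by blast
    have "app (acomp (Tint (h u, h u')) (acomp (ainv (Tint (u, u'))) g)) k = x"
      unfolding TT acomp_assoc using acomp_ainv[OF Xnz] g(3) by simp
    then show "x \<in> (\<Union>f\<in>w. app (acomp (Tint (h u, h u')) f) ` K)" using gw g(2) by blast
  qed
  have i5: "K \<inter> {h u<..<h u'} \<noteq> {}"
    using Kcond[OF inv N1(1) N1(3)] Q unfolding Qn_def h_def T_def by (auto simp: Int_commute)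
  show ?thesis unfolding tre Inv_def fst_conv snd_conv using i1 i2 i3 i4 i5 by blast
qed

lemma raw_Inv: "Inv x \<Longrightarrow> y \<in> raw_children r d K \<Phi> x \<Longrightarrow> Inv y"
proof -
  assume inv: "Inv x" and y: "y \<in> raw_children r d K \<Phi> x"
  have inv': "Inv (fst x, snd x)" using inv by simp
  have "y \<in> tr (fst x) ` ncs (snd x)" using y RC[OF inv'] by simp
  then obtain u u' w where "((u, u'), w) \<in> ncs (snd x)" "y = tr (fst x) ((u, u'), w)" by auto
  then show "Inv y" using Inv_child[OF inv'] by blast
qed

definition nsame :: "aff set \<Rightarrow> aff set \<Rightarrow> bool" where
  "nsame v w \<longleftrightarrow> ncs v = {((0, 1), w)}"

definition nstops :: "aff set \<Rightarrow> bool" where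
  "nstops v \<longleftrightarrow> \<not> (\<exists>w. nsame v w)"

definition NCH :: "aff set \<Rightarrow> npair set" where
  "NCH v = \<Union> {ncs w | w. nsame\<^sup>*\<^sup>* v w \<and> nstops w}"

lemma same_iff:
  assumes inv: "Inv (\<Delta>, v)"
  shows "same_step r d K \<Phi> (\<Delta>, v) y \<longleftrightarrow> (\<exists>w. nsame v w \<and> y = (\<Delta>, w))"
proof
  have ab: "fst \<Delta> < snd \<Delta>" using Inv_D(1)[OF inv] .
  assume "same_step r d K \<Phi> (\<Delta>, v) y"
  then have y: "tr \<Delta> ` ncs v = {y}" "fst y = \<Delta>" unfolding same_step_def RC[OF inv] by auto
  have "y \<in> tr \<Delta> ` ncs v" using y(1) by blast
  then obtain n where n: "n \<in> ncs v" "tr \<Delta> n = y" by (rule imageE) simp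
  have "\<forall>n'\<in>ncs v. n' = n" using y(1) n tr_inj[OF ab] by blast
  then have nn: "ncs v = {n}" using n(1) by blast
  obtain u u' w where nd: "n = ((u, u'), w)" by (metis prod.collapse)
  have "tr \<Delta> n = ((app (Tint \<Delta>) u, app (Tint \<Delta>) u'), w)" using nd by (simp add: tr_def)
  then have "(app (Tint \<Delta>) u, app (Tint \<Delta>) u') = \<Delta>" using y(2) n(2) by (metis fst_conv)
  then have "app (Tint \<Delta>) u = app (Tint \<Delta>) 0" "app (Tint \<Delta>) u' = app (Tint \<Delta>) 1"
    by (auto simp: prod_eq_iff)
  then have "u = 0" "u' = 1" using app_Tint_eq[OF ab] by blast+
  then have "nsame v w" "y = (\<Delta>, w)" using nn nd n(2) tr_01 unfolding nsame_def by auto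
  then show "\<exists>w. nsame v w \<and> y = (\<Delta>, w)" by blast
next
  assume "\<exists>w. nsame v w \<and> y = (\<Delta>, w)"
  then obtain w where w: "nsame v w" "y = (\<Delta>, w)" by blast
  then have "raw_children r d K \<Phi> (\<Delta>, v) = {(\<Delta>, w)}" unfolding RC[OF inv] nsame_def using tr_01 by simp
  then show "same_step r d K \<Phi> (\<Delta>, v) y" unfolding same_step_def using w by simp
qed

lemma nsame_Inv: "Inv (\<Delta>, v) \<Longrightarrow> nsame v w \<Longrightarrow> Inv (\<Delta>, w)"
  using Inv_child[of \<Delta> v 0 1 w] tr_01 unfolding nsame_def by simp

lemma nsame_rtr_Inv: "nsame\<^sup>*\<^sup>* v w \<Longrightarrow> Inv (\<Delta>, v) \<Longrightarrow> Inv (\<Delta>, w)"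
  by (induction rule: rtranclp_induct) (auto intro: nsame_Inv)

lemma stops_iff: "Inv (\<Delta>, v) \<Longrightarrow> stops r d K \<Phi> (\<Delta>, v) \<longleftrightarrow> nstops v"
  unfolding stops_def nstops_def using same_iff by blast

lemma rtr_iff:
  assumes inv: "Inv (\<Delta>, v)"
  shows "(same_step r d K \<Phi>)\<^sup>*\<^sup>* (\<Delta>, v) z \<longleftrightarrow> (\<exists>w. nsame\<^sup>*\<^sup>* v w \<and> z = (\<Delta>, w))"
proof
  assume "(same_step r d K \<Phi>)\<^sup>*\<^sup>* (\<Delta>, v) z"
  then show "\<exists>w. nsame\<^sup>*\<^sup>* v w \<and> z = (\<Delta>, w)"
  proof (induction rule: rtranclp_induct)
    case base then show ?case by blast
  next
    case (step y z)
    then obtain w where w: "nsame\<^sup>*\<^sup>* v w" "y = (\<Delta>, w)" by blast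
    have "Inv (\<Delta>, w)" using nsame_rtr_Inv[OF w(1) inv] .
    then obtain w' where w': "nsame w w'" "z = (\<Delta>, w')" using step(2) w(2) same_iff by blast
    have "nsame\<^sup>*\<^sup>* v w'" using w(1) w'(1) by (rule rtranclp.rtrancl_into_rtrancl)
    then show ?case using w'(2) by blast
  qed
next
  assume "\<exists>w. nsame\<^sup>*\<^sup>* v w \<and> z = (\<Delta>, w)"
  then obtain w where w: "nsame\<^sup>*\<^sup>* v w" "z = (\<Delta>, w)" by blast
  have "(same_step r d K \<Phi>)\<^sup>*\<^sup>* (\<Delta>, v) (\<Delta>, w)" using w(1)
  proof (induction rule: rtranclp_induct)
    case base then show ?case by simp
  next
    case (step y z)
    have "Inv (\<Delta>, y)" using nsame_rtr_Inv[OF step(1) inv] .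
    then have "same_step r d K \<Phi> (\<Delta>, y) (\<Delta>, z)" using same_iff step(2) by blast
    then show ?case using step(3) by (meson rtranclp.rtrancl_into_rtrancl)
  qed
  then show "(same_step r d K \<Phi>)\<^sup>*\<^sup>* (\<Delta>, v) z" using w(2) by simp
qed

lemma children_eq:
  assumes inv: "Inv (\<Delta>, v)"
  shows "children r d K \<Phi> (\<Delta>, v) = tr \<Delta> ` NCH v"
proof -
  have "{raw_children r d K \<Phi> z | z. (same_step r d K \<Phi>)\<^sup>*\<^sup>* (\<Delta>, v) z \<and> stops r d K \<Phi> z}
      = {tr \<Delta> ` ncs w | w. nsame\<^sup>*\<^sup>* v w \<and> nstops w}"
  proof (intro set_eqI iffI)
    fix X assume "X \<in> {raw_children r d K \<Phi> z | z. (same_step r d K \<Phi>)\<^sup>*\<^sup>* (\<Delta>, v) z \<and> stops r d K \<Phi> z}"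
    then obtain z where z: "X = raw_children r d K \<Phi> z" "(same_step r d K \<Phi>)\<^sup>*\<^sup>* (\<Delta>, v) z" "stops r d K \<Phi> z"
      by blast
    then obtain w where w: "nsame\<^sup>*\<^sup>* v w" "z = (\<Delta>, w)" using rtr_iff[OF inv] by blast
    have iw: "Inv (\<Delta>, w)" using nsame_rtr_Inv[OF w(1) inv] .
    have "X = tr \<Delta> ` ncs w" "nstops w" using z w RC[OF iw] stops_iff[OF iw] by auto
    then show "X \<in> {tr \<Delta> ` ncs w | w. nsame\<^sup>*\<^sup>* v w \<and> nstops w}" using w(1) by blast
  next
    fix X assume "X \<in> {tr \<Delta> ` ncs w | w. nsame\<^sup>*\<^sup>* v w \<and> nstops w}"
    then obtain w where w: "X = tr \<Delta> ` ncs w" "nsame\<^sup>*\<^sup>* v w" "nstops w" by blast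
    have iw: "Inv (\<Delta>, w)" using nsame_rtr_Inv[OF w(2) inv] .
    have "X = raw_children r d K \<Phi> (\<Delta>, w)" "(same_step r d K \<Phi>)\<^sup>*\<^sup>* (\<Delta>, v) (\<Delta>, w)" "stops r d K \<Phi> (\<Delta>, w)"
      using w RC[OF iw] stops_iff[OF iw] rtr_iff[OF inv] by auto
    then show "X \<in> {raw_children r d K \<Phi> z | z. (same_step r d K \<Phi>)\<^sup>*\<^sup>* (\<Delta>, v) z \<and> stops r d K \<Phi> z}"
      by blast
  qed
  then show ?thesis unfolding children_def NCH_def by auto
qed

lemma children_Inv: "Inv x \<Longrightarrow> y \<in> children r d K \<Phi> x \<Longrightarrow> Inv y"
proof -
  assume inv: "Inv x" and y: "y \<in> children r d K \<Phi> x"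
  then obtain z where z: "y \<in> raw_children r d K \<Phi> z" "(same_step r d K \<Phi>)\<^sup>*\<^sup>* x z"
    unfolding children_def by blast
  have "Inv z" using z(2) inv
    by (induction rule: rtranclp_induct) (auto simp: same_step_def intro: raw_Inv)
  then show "Inv y" using z(1) raw_Inv by blast
qed

lemma root_Inv: "Inv root_pair"
proof -
  have t: "Tint (0, 1) = aid" by (simp add: Tint_def aid_def)
  have a: "\<forall>f\<in>{aid}. \<exists>\<sigma>\<in>lists I. acomp (Tint (0, 1)) f = S \<sigma>"
    unfolding t by (auto intro!: bexI[of _ "[]"])
  have b: "K \<inter> {0<..<1} \<subseteq> (\<Union>f\<in>{aid}. app (acomp (Tint (0, 1)) f) ` K)"
    unfolding t by auto
  show ?thesis unfolding Inv_def root_pair_def fst_conv snd_conv using a b K_inner by auto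
qed

lemma netN_Inv: "x \<in> netN r d K \<Phi> n \<Longrightarrow> Inv x"
  by (induction n arbitrary: x) (auto simp: root_Inv intro: children_Inv)

lemma nsame_det: "nsame v w1 \<Longrightarrow> nsame v w2 \<Longrightarrow> w1 = w2"
  unfolding nsame_def by auto

lemma nsame_rtr_det:
  assumes "nsame\<^sup>*\<^sup>* v w1" "nsame\<^sup>*\<^sup>* v w2"
  shows "nsame\<^sup>*\<^sup>* w1 w2 \<or> nsame\<^sup>*\<^sup>* w2 w1"
  using assms(1)
proof (induction rule: rtranclp_induct)
  case base then show ?case using assms(2) by blast
next
  case (step y z)
  from step(3) show ?case
  proof
    assume "nsame\<^sup>*\<^sup>* y w2"
    then show ?thesis
    proof (cases rule: converse_rtranclpE)
      case base then show ?thesis using step(2) by blast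
    next
      case (step x)
      then have "x = z" using \<open>nsame y z\<close> nsame_det by blast
      then show ?thesis using step by blast
    qed
  next
    assume "nsame\<^sup>*\<^sup>* w2 y"
    then show ?thesis using step(2) by (meson rtranclp.rtrancl_into_rtrancl)
  qed
qed

lemma nstops_unique:
  assumes "nsame\<^sup>*\<^sup>* v w1" "nsame\<^sup>*\<^sup>* v w2" "nstops w1" "nstops w2"
  shows "w1 = w2"
proof -
  have A: "w = w'" if "nsame\<^sup>*\<^sup>* w w'" "nstops w" for w w'
    using that(1) by (cases rule: converse_rtranclpE) (use that(2) nstops_def in auto)
  show ?thesis using nsame_rtr_det[OF assms(1,2)] A assms(3,4) by metis
qed

lemma NCH_N1: "((u, u'), w) \<in> NCH v \<Longrightarrow> 0 \<le> u \<and> u < u' \<and> u' \<le> 1"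
proof -
  assume "((u, u'), w) \<in> NCH v"
  then obtain x where "((u, u'), w) \<in> ncs x" unfolding NCH_def by blast
  then show ?thesis by (rule ncs_N1)
qed

lemma NCH_N2:
  assumes "((u1, u1'), w1) \<in> NCH v" "((u2, u2'), w2) \<in> NCH v"
    and "{u1<..<u1'} \<inter> {u2<..<u2'} \<noteq> {}"
  shows "u1 = u2 \<and> u1' = u2' \<and> w1 = w2"
proof -
  obtain x1 where x1: "((u1, u1'), w1) \<in> ncs x1" "nsame\<^sup>*\<^sup>* v x1" "nstops x1"
    using assms(1) unfolding NCH_def by blast
  obtain x2 where x2: "((u2, u2'), w2) \<in> ncs x2" "nsame\<^sup>*\<^sup>* v x2" "nstops x2"
    using assms(2) unfolding NCH_def by blast
  have "x1 = x2" using nstops_unique x1 x2 by blast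
  then have "((u2, u2'), w2) \<in> ncs x1" using x2(1) by simp
  then show ?thesis using ncs_N2[OF x1(1) _ assms(3)] by blast
qed

lemma NCH_not01: "((u, u'), w) \<in> NCH v \<Longrightarrow> (u, u') \<noteq> (0, 1)"
proof
  assume a: "((u, u'), w) \<in> NCH v" and e: "(u, u') = (0, 1)"
  obtain x where x: "((u, u'), w) \<in> ncs x" "nsame\<^sup>*\<^sup>* v x" "nstops x"
    using a unfolding NCH_def by blast
  have all: "n = ((u, u'), w)" if n: "n \<in> ncs x" for n
  proof -
    obtain a1 a2 w' where nd: "n = ((a1, a2), w')" using prod.collapse by metis
    have n': "((a1, a2), w') \<in> ncs x" using n nd by simp
    have "0 \<le> a1 \<and> a1 < a2 \<and> a2 \<le> 1" using ncs_N1[OF n'] .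
    then have "(a1 + a2) / 2 \<in> {a1<..<a2} \<inter> {u<..<u'}" using e by auto
    then have ne: "{a1<..<a2} \<inter> {u<..<u'} \<noteq> {}" by blast
    have "a1 = u \<and> a2 = u' \<and> w' = w" using ncs_N2[OF n' x(1) ne] .
    then show "n = ((u, u'), w)" using nd by simp
  qed
  have "ncs x = {((u, u'), w)}" using x(1) all by blast
  then have "nsame x w" using e unfolding nsame_def by simp
  then show False using x(3) unfolding nstops_def by blast
qed

end

lemma diverge:
  "\<not> prefix xs ys \<Longrightarrow> \<not> prefix ys xs \<Longrightarrow> \<exists>as b bs c cs. b \<noteq> c \<and> xs = as @ b # bs \<and> ys = as @ c # cs"
proof (induction xs arbitrary: ys)
  case Nil then show ?case by simp
next
  case (Cons x xs)
  show ?case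
  proof (cases ys)
    case Nil then show ?thesis using Cons.prems by simp
  next
    case (Cons y ys')
    show ?thesis
    proof (cases "x = y")
      case False then show ?thesis using Cons by (intro exI[of _ "[]"]) auto
    next
      case True
      then have "\<not> prefix xs ys'" "\<not> prefix ys' xs" using Cons.prems \<open>ys = y # ys'\<close> by auto
      then obtain as b bs c cs where "b \<noteq> c" "xs = as @ b # bs" "ys' = as @ c # cs"
        using Cons.IH by blast
      then show ?thesis using True \<open>ys = y # ys'\<close> by (intro exI[of _ "x # as"]) auto
    qed
  qed
qed

context wifs begin

abbreviation E where "E \<equiv> tg_edges r d K \<Phi>"
abbreviation V where "V \<equiv> tg_vertices r d K \<Phi>"
abbreviation rooted where "rooted \<equiv> rooted_path r d K \<Phi>"

definition vend :: "edge list \<Rightarrow> aff set" where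
  "vend es = (if es = [] then {aid} else snd (snd (last es)))"

lemma rooted_Nil: "rooted []"
  by (simp add: rooted_path_def)

lemma rooted_snoc: "rooted (es @ [e]) \<longleftrightarrow> rooted es \<and> e \<in> E \<and> fst e = vend es"
proof
  assume R: "rooted (es @ [e])"
  have s: "set es \<subseteq> E" "e \<in> E" using R unfolding rooted_path_def by auto
  have h: "es \<noteq> [] \<longrightarrow> fst (hd es) = {aid}" using R unfolding rooted_path_def by auto
  have c: "\<forall>k. Suc k < length (es @ [e]) \<longrightarrow> snd (snd ((es @ [e]) ! k)) = fst ((es @ [e]) ! Suc k)"
    using R unfolding rooted_path_def by blast
  have c': "\<forall>k. Suc k < length es \<longrightarrow> snd (snd (es ! k)) = fst (es ! Suc k)"
  proof (intro allI impI)
    fix k assume k: "Suc k < length es"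
    then show "snd (snd (es ! k)) = fst (es ! Suc k)" using c[rule_format, of k] k by (simp add: nth_append)
  qed
  have v: "fst e = vend es"
  proof (cases "es = []")
    case True then show ?thesis using R unfolding rooted_path_def vend_def by simp
  next
    case False
    then obtain k where k: "length es = Suc k" by (cases es) auto
    have "snd (snd ((es @ [e]) ! k)) = fst ((es @ [e]) ! Suc k)" using c k by simp
    moreover have "(es @ [e]) ! k = last es" using k False by (simp add: nth_append last_conv_nth)
    moreover have "(es @ [e]) ! Suc k = e" using k by (simp add: nth_append)
    ultimately show ?thesis using False unfolding vend_def by simp
  qed
  show "rooted es \<and> e \<in> E \<and> fst e = vend es" using s h c' v unfolding rooted_path_def by blast
next
  assume A: "rooted es \<and> e \<in> E \<and> fst e = vend es"
  have s: "set (es @ [e]) \<subseteq> E" using A unfolding rooted_path_def by auto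
  have h: "es @ [e] \<noteq> [] \<longrightarrow> fst (hd (es @ [e])) = {aid}"
    using A unfolding rooted_path_def vend_def by (cases es) auto
  have c: "\<forall>k. Suc k < length (es @ [e]) \<longrightarrow> snd (snd ((es @ [e]) ! k)) = fst ((es @ [e]) ! Suc k)"
  proof (intro allI impI)
    fix k assume k: "Suc k < length (es @ [e])"
    show "snd (snd ((es @ [e]) ! k)) = fst ((es @ [e]) ! Suc k)"
    proof (cases "Suc k < length es")
      case True then show ?thesis using A unfolding rooted_path_def by (simp add: nth_append)
    next
      case False
      then have k2: "length es = Suc k" using k by simp
      then have "es \<noteq> []" by auto
      then have "(es @ [e]) ! k = last es" using k2 by (simp add: nth_append last_conv_nth)
      moreover have "(es @ [e]) ! Suc k = e" using k2 by (simp add: nth_append)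
      ultimately show ?thesis using A \<open>es \<noteq> []\<close> unfolding vend_def by simp
    qed
  qed
  show "rooted (es @ [e])" using s h c unfolding rooted_path_def by blast
qed

lemma rooted_prefix: "rooted (xs @ ys) \<Longrightarrow> rooted xs"
proof (induction ys rule: rev_induct)
  case Nil then show ?case by simp
next
  case (snoc y ys)
  then show ?case using rooted_snoc[of "xs @ ys" y] by simp
qed

lemma pi_snoc: "path_interval (es @ [e]) =
   (app (Tint (path_interval es)) (fst (fst (snd e))), app (Tint (path_interval es)) (snd (fst (snd e))))"
  by (simp add: path_interval_def app_Tint)

lemma pi_Nil: "path_interval [] = (0, 1)"
  by (simp add: path_interval_def)

lemma pw_snoc: "path_weight (es @ [e]) = path_weight es * edge_weight e"
  by (simp add: path_weight_def)

lemma pw_append: "path_weight (xs @ ys) = path_weight xs * path_weight ys"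
  by (simp add: path_weight_def)

lemma pw_Nil: "path_weight [] = 1"
  by (simp add: path_weight_def)

lemma E_char:
  assumes "e \<in> E"
  shows "\<exists>v u u' v'. e = (v, (u, u'), v') \<and> ((u, u'), v') \<in> NCH v \<and> v \<in> V"
proof -
  obtain v v' \<Delta> \<Delta>' n where e: "e = (v, relpos \<Delta> \<Delta>', v')" "(\<Delta>, v) \<in> netN r d K \<Phi> n"
    "(\<Delta>', v') \<in> children r d K \<Phi> (\<Delta>, v)"
    using assms unfolding tg_edges_def by blast
  have inv: "Inv (\<Delta>, v)" using netN_Inv e(2) by blast
  have ab: "fst \<Delta> < snd \<Delta>" using Inv_D(1)[OF inv] .
  have "(\<Delta>', v') \<in> tr \<Delta> ` NCH v" using e(3) children_eq[OF inv] by simp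
  then obtain nn where nn: "nn \<in> NCH v" "tr \<Delta> nn = (\<Delta>', v')" by (rule imageE) simp
  obtain u u' w where nd: "nn = ((u, u'), w)" using prod.collapse by metis
  have "\<Delta>' = (app (Tint \<Delta>) u, app (Tint \<Delta>) u')" "w = v'" using nn(2) nd by (auto simp: tr_def)
  then have "relpos \<Delta> \<Delta>' = (u, u')" using relpos_tr[OF ab] by simp
  moreover have "v \<in> V" using e(2) unfolding tg_vertices_def by blast
  ultimately show ?thesis using e(1) nn(1) nd \<open>w = v'\<close> by blast
qed

lemma E_weight:
  assumes "e \<in> E"
  shows "0 < edge_weight e" "edge_weight e < 1" "0 \<le> fst (fst (snd e))" "snd (fst (snd e)) \<le> 1"
    "fst (fst (snd e)) < snd (fst (snd e))"
proof -
  obtain v u u' v' where e: "e = (v, (u, u'), v')" "((u, u'), v') \<in> NCH v"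
    using E_char[OF assms] by blast
  have N1: "0 \<le> u \<and> u < u' \<and> u' \<le> 1" using NCH_N1[OF e(2)] .
  have "(u, u') \<noteq> (0, 1)" using NCH_not01[OF e(2)] .
  then have "u' - u < 1" using N1 by auto
  then show "0 < edge_weight e" "edge_weight e < 1" "0 \<le> fst (fst (snd e))" "snd (fst (snd e)) \<le> 1"
    "fst (fst (snd e)) < snd (fst (snd e))"
    using N1 e(1) unfolding edge_weight_def by auto
qed

lemma Corr: "rooted es \<Longrightarrow> (path_interval es, vend es) \<in> netN r d K \<Phi> (length es)"
proof (induction es rule: rev_induct)
  case Nil then show ?case by (simp add: pi_Nil vend_def root_pair_def)
next
  case (snoc e es)
  have R: "rooted es" "e \<in> E" "fst e = vend es" using snoc.prems rooted_snoc by auto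
  define \<Delta> where "\<Delta> = path_interval es"
  have IH: "(\<Delta>, vend es) \<in> netN r d K \<Phi> (length es)" using snoc.IH R(1) unfolding \<Delta>_def by blast
  have inv: "Inv (\<Delta>, vend es)" using netN_Inv IH by blast
  obtain v u u' v' where e: "e = (v, (u, u'), v')" "((u, u'), v') \<in> NCH v" using E_char[OF R(2)] by blast
  have vv: "v = vend es" using R(3) e(1) by simp
  have "tr \<Delta> ((u, u'), v') \<in> children r d K \<Phi> (\<Delta>, vend es)"
    using children_eq[OF inv] e(2) vv by simp
  moreover have "tr \<Delta> ((u, u'), v') = (path_interval (es @ [e]), vend (es @ [e]))"
    using e(1) unfolding pi_snoc \<Delta>_def[symmetric] by (simp add: tr_def vend_def)
  ultimately show ?case using IH by auto
qed

lemma RevCorr: "x \<in> netN r d K \<Phi> n \<Longrightarrow>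
   \<exists>es. rooted es \<and> length es = n \<and> path_interval es = fst x \<and> vend es = snd x"
proof (induction n arbitrary: x)
  case 0
  then show ?case using rooted_Nil by (intro exI[of _ "[]"]) (simp add: pi_Nil vend_def root_pair_def)
next
  case (Suc n)
  then obtain y where y: "y \<in> netN r d K \<Phi> n" "x \<in> children r d K \<Phi> y" by auto
  obtain es where es: "rooted es" "length es = n" "path_interval es = fst y" "vend es = snd y"
    using Suc.IH[OF y(1)] by blast
  obtain \<Delta> v where yd: "y = (\<Delta>, v)" by (metis prod.collapse)
  have inv: "Inv (\<Delta>, v)" using netN_Inv y(1) yd by blast
  have ab: "fst \<Delta> < snd \<Delta>" using Inv_D(1)[OF inv] .
  have "x \<in> tr \<Delta> ` NCH v" using y(2) yd children_eq[OF inv] by simp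
  then obtain nn where nn: "nn \<in> NCH v" "x = tr \<Delta> nn" by (rule imageE) simp
  obtain u u' v' where nd: "nn = ((u, u'), v')" using prod.collapse by metis
  define e where "e = (v, (u, u'), v')"
  have xe: "x = ((app (Tint \<Delta>) u, app (Tint \<Delta>) u'), v')" using nn(2) nd by (simp add: tr_def)
  have "e \<in> E"
  proof -
    have "x \<in> children r d K \<Phi> (\<Delta>, v)" using y(2) yd by simp
    then have "(v, relpos \<Delta> (app (Tint \<Delta>) u, app (Tint \<Delta>) u'), v') \<in> E"
      unfolding tg_edges_def using y(1) yd xe by blast
    then show ?thesis unfolding e_def relpos_tr[OF ab] .
  qed
  then have "rooted (es @ [e])" using es rooted_snoc yd unfolding e_def by simp
  moreover have "path_interval (es @ [e]) = fst x" unfolding pi_snoc es(3) yd e_def xe by simp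
  moreover have "vend (es @ [e]) = snd x" unfolding xe e_def vend_def by simp
  ultimately show ?case using es(2) by (intro exI[of _ "es @ [e]"]) simp
qed

lemma pi_diam: "snd (path_interval es) - fst (path_interval es) = path_weight es"
proof (induction es rule: rev_induct)
  case Nil then show ?case by (simp add: pi_Nil pw_Nil)
next
  case (snoc e es)
  then show ?case unfolding pi_snoc pw_snoc by (simp add: app_Tint edge_weight_def algebra_simps)
qed

lemma pw_pos: "set es \<subseteq> E \<Longrightarrow> 0 < path_weight es"
  unfolding path_weight_def
proof (induction es)
  case Nil then show ?case by simp
next
  case (Cons e es)
  then have "0 < edge_weight e" "0 < prod_list (map edge_weight es)" using E_weight(1)[of e] by auto
  then show ?case by simp
qed

lemma pw_le1: "set es \<subseteq> E \<Longrightarrow> path_weight es \<le> 1"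
  unfolding path_weight_def
proof (induction es)
  case Nil then show ?case by simp
next
  case (Cons e es)
  then have "edge_weight e \<le> 1" "0 \<le> edge_weight e" "prod_list (map edge_weight es) \<le> 1"
      "0 \<le> prod_list (map edge_weight es)"
    using E_weight[of e] pw_pos[of es] unfolding path_weight_def by auto
  then show ?case using mult_mono[of "edge_weight e" 1 "prod_list (map edge_weight es)" 1] by simp
qed

lemma pi_nest:
  assumes "set ys \<subseteq> E" "fst (path_interval xs) < snd (path_interval xs)"
  shows "fst (path_interval xs) \<le> fst (path_interval (xs @ ys)) \<and>
         fst (path_interval (xs @ ys)) < snd (path_interval (xs @ ys)) \<and>
         snd (path_interval (xs @ ys)) \<le> snd (path_interval xs)"
  using assms(1)
proof (induction ys rule: rev_induct)
  case Nil then show ?case using assms(2) by simp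
next
  case (snoc y ys)
  define a where "a = fst (path_interval (xs @ ys))"
  define b where "b = snd (path_interval (xs @ ys))"
  have IH: "fst (path_interval xs) \<le> a" "a < b" "b \<le> snd (path_interval xs)"
    using snoc by (auto simp: a_def b_def)
  have yE: "y \<in> E" using snoc.prems by auto
  define u where "u = fst (fst (snd y))"
  define u' where "u' = snd (fst (snd y))"
  have uu: "0 \<le> u" "u < u'" "u' \<le> 1" using E_weight[OF yE] unfolding u_def u'_def by auto
  have eq: "path_interval (xs @ ys @ [y]) = (a + (b - a) * u, a + (b - a) * u')"
    using pi_snoc[of "xs @ ys" y] unfolding a_def b_def u_def u'_def by (simp add: app_Tint)
  have "0 \<le> (b - a) * u" using IH uu by simp
  moreover have "(b - a) * u < (b - a) * u'" using IH uu by simp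
  moreover have m: "(b - a) * u' \<le> (b - a) * 1" using IH uu by (intro mult_left_mono) auto
  then have "a + (b - a) * u' \<le> b" by (simp only: mult_1_right)
  ultimately show ?case unfolding eq using IH by simp
qed

lemma pi_rooted_pos: "rooted es \<Longrightarrow> fst (path_interval es) < snd (path_interval es)"
  using pi_nest[of es "[]"] pi_diam[of es] pw_pos[of es] unfolding rooted_path_def by simp

lemma disjoint_paths:
  assumes R1: "rooted es1" and R2: "rooted es2" and np: "\<not> prefix es1 es2" "\<not> prefix es2 es1"
  shows "{fst (path_interval es1)<..<snd (path_interval es1)} \<inter> {fst (path_interval es2)<..<snd (path_interval es2)} = {}"
proof -
  obtain as b bs c cs where dv: "b \<noteq> c" "es1 = as @ b # bs" "es2 = as @ c # cs"
    using diverge[OF np] by blast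
  have Rb: "rooted (as @ [b])" using R1 dv(2) rooted_prefix[of "as @ [b]" bs] by simp
  have Rc: "rooted (as @ [c])" using R2 dv(3) rooted_prefix[of "as @ [c]" cs] by simp
  have b: "b \<in> E" "fst b = vend as" and c: "c \<in> E" "fst c = vend as"
    using Rb Rc rooted_snoc by auto
  obtain v u1 u1' w1 where be: "b = (v, (u1, u1'), w1)" "((u1, u1'), w1) \<in> NCH v" using E_char[OF b(1)] by blast
  obtain v2 u2 u2' w2 where ce: "c = (v2, (u2, u2'), w2)" "((u2, u2'), w2) \<in> NCH v2" using E_char[OF c(1)] by blast
  have vv: "v2 = v" using b(2) c(2) be ce by simp
  have dis: "{u1<..<u1'} \<inter> {u2<..<u2'} = {}"
  proof (rule ccontr)
    assume "{u1<..<u1'} \<inter> {u2<..<u2'} \<noteq> {}"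
    then have "u1 = u2 \<and> u1' = u2' \<and> w1 = w2" using NCH_N2[OF be(2)] ce(2) vv by blast
    then show False using dv(1) be ce vv by simp
  qed
  define \<Delta> where "\<Delta> = path_interval as"
  have ab: "fst \<Delta> < snd \<Delta>" unfolding \<Delta>_def using pi_rooted_pos rooted_prefix Rb by blast
  have pb: "path_interval (as @ [b]) = (app (Tint \<Delta>) u1, app (Tint \<Delta>) u1')" unfolding pi_snoc \<Delta>_def be by simp
  have pc: "path_interval (as @ [c]) = (app (Tint \<Delta>) u2, app (Tint \<Delta>) u2')" unfolding pi_snoc \<Delta>_def ce by simp
  have dis2: "{app (Tint \<Delta>) u1<..<app (Tint \<Delta>) u1'} \<inter> {app (Tint \<Delta>) u2<..<app (Tint \<Delta>) u2'} = {}"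
  proof (rule ccontr)
    assume "{app (Tint \<Delta>) u1<..<app (Tint \<Delta>) u1'} \<inter> {app (Tint \<Delta>) u2<..<app (Tint \<Delta>) u2'} \<noteq> {}"
    then obtain y where y: "y \<in> {app (Tint \<Delta>) u1<..<app (Tint \<Delta>) u1'}" "y \<in> {app (Tint \<Delta>) u2<..<app (Tint \<Delta>) u2'}"
      by blast
    define z where "z = app (ainv (Tint \<Delta>)) y"
    have yz: "y = app (Tint \<Delta>) z" unfolding z_def using app_ainv2[of "Tint \<Delta>" y] ab by simp
    have "z \<in> {u1<..<u1'} \<inter> {u2<..<u2'}" using y unfolding yz using app_Tint_less[OF ab] by auto
    then show False using dis by blast
  qed
  have sb: "set bs \<subseteq> E" and sc: "set cs \<subseteq> E" using R1 R2 dv unfolding rooted_path_def by auto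
  have pbpos: "fst (path_interval (as @ [b])) < snd (path_interval (as @ [b]))" using pi_rooted_pos[OF Rb] .
  have pcpos: "fst (path_interval (as @ [c])) < snd (path_interval (as @ [c]))" using pi_rooted_pos[OF Rc] .
  have n1: "fst (path_interval (as @ [b])) \<le> fst (path_interval es1)" "snd (path_interval es1) \<le> snd (path_interval (as @ [b]))"
    using pi_nest[OF sb pbpos] dv(2) by auto
  have n2: "fst (path_interval (as @ [c])) \<le> fst (path_interval es2)" "snd (path_interval es2) \<le> snd (path_interval (as @ [c]))"
    using pi_nest[OF sc pcpos] dv(3) by auto
  show ?thesis
  proof (rule ccontr)
    assume "{fst (path_interval es1)<..<snd (path_interval es1)} \<inter> {fst (path_interval es2)<..<snd (path_interval es2)} \<noteq> {}"
    then obtain y where "y \<in> {fst (path_interval es1)<..<snd (path_interval es1)}" "y \<in> {fst (path_interval es2)<..<snd (path_interval es2)}"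
      by blast
    then have "y \<in> {app (Tint \<Delta>) u1<..<app (Tint \<Delta>) u1'}" "y \<in> {app (Tint \<Delta>) u2<..<app (Tint \<Delta>) u2'}"
      using n1 n2 pb pc by auto
    then show False using dis2 by blast
  qed
qed

end

context wifs begin

lemma finE: "finite E" using fnc unfolding FNC_def by blast
lemma finV: "finite V" using fnc unfolding FNC_def by blast

lemma aid_V: "{aid} \<in> V"
  unfolding tg_vertices_def by (rule CollectI, rule exI[of _ 0]) (auto simp: root_pair_def)

definition wmin where "wmin = Min (insert 1 (edge_weight ` E))"
definition wmax where "wmax = Max (insert (1/2) (edge_weight ` E))"

lemma wmin_pos: "0 < wmin"
  unfolding wmin_def using finE E_weight(1) by (subst Min_gr_iff) auto
lemma wmin_le: "e \<in> E \<Longrightarrow> wmin \<le> edge_weight e"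
  unfolding wmin_def using finE by (intro Min_le) auto
lemma wmax_less: "wmax < 1"
  unfolding wmax_def using finE E_weight(2) by (subst Max_less_iff) auto
lemma wmax_ge: "e \<in> E \<Longrightarrow> edge_weight e \<le> wmax"
  unfolding wmax_def using finE by (intro Max_ge) auto
lemma wmax_pos: "0 < wmax"
  unfolding wmax_def using finE by (subst Max_gr_iff) auto

lemma pw_upper: "set es \<subseteq> E \<Longrightarrow> path_weight es \<le> wmax ^ length es"
  unfolding path_weight_def
proof (induction es)
  case Nil then show ?case by simp
next
  case (Cons e es)
  then have "edge_weight e \<le> wmax" "0 \<le> edge_weight e" "prod_list (map edge_weight es) \<le> wmax ^ length es"
    "0 \<le> prod_list (map edge_weight es)"
    using wmax_ge E_weight(1)[of e] pw_pos[of es] unfolding path_weight_def by auto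
  then show ?case using mult_mono[of "edge_weight e" wmax "prod_list (map edge_weight es)"] wmax_pos by simp
qed

abbreviation F where "F \<equiv> Fset r d K \<Phi>"

lemma F_D:
  assumes "es \<in> F t"
  shows "rooted es" "es \<noteq> []" "path_weight es \<le> t" "t < path_weight (butlast es)"
    "wmin * t < path_weight es" "snd (path_interval es) - fst (path_interval es) = path_weight es"
    "fst (path_interval es) < snd (path_interval es)"
proof -
  show R: "rooted es" "es \<noteq> []" "path_weight es \<le> t" "t < path_weight (butlast es)"
    using assms unfolding Fset_def by auto
  show "snd (path_interval es) - fst (path_interval es) = path_weight es" by (rule pi_diam)
  show "fst (path_interval es) < snd (path_interval es)" by (rule pi_rooted_pos[OF R(1)])
  have es: "es = butlast es @ [last es]" using R(2) by simp
  have lE: "last es \<in> E" using R(1,2) unfolding rooted_path_def by auto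
  have bE: "set (butlast es) \<subseteq> E" using R(1) unfolding rooted_path_def by (meson in_set_butlastD subset_code(1))
  have "path_weight es = path_weight (butlast es) * edge_weight (last es)"
    using pw_snoc[of "butlast es" "last es"] es by simp
  moreover have "t * wmin < path_weight (butlast es) * edge_weight (last es)"
  proof -
    have "t * wmin \<le> t * edge_weight (last es)" using wmin_le[OF lE] R(3) pw_pos[of es] R(1) unfolding rooted_path_def
      by (intro mult_left_mono) auto
    also have "\<dots> < path_weight (butlast es) * edge_weight (last es)"
      using R(4) E_weight(1)[OF lE] by (intro mult_strict_right_mono) auto
    finally show ?thesis .
  qed
  ultimately show "wmin * t < path_weight es" by (simp add: mult.commute)
qed

lemma F_finite:
  assumes "0 < t"
  shows "finite (F t)"
proof -
  obtain L where L: "wmax ^ L < t" using real_arch_pow_inv[OF assms wmax_less] by blast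
  have "F t \<subseteq> {xs. set xs \<subseteq> E \<and> length xs \<le> L}"
  proof
    fix es assume es: "es \<in> F t"
    have sE: "set es \<subseteq> E" using F_D(1)[OF es] unfolding rooted_path_def by auto
    have "set (butlast es) \<subseteq> E" using sE by (meson in_set_butlastD subset_code(1))
    then have "t < wmax ^ length (butlast es)" using F_D(4)[OF es] pw_upper by (meson less_le_trans)
    then have "\<not> L \<le> length (butlast es)"
    proof (intro notI)
      assume "L \<le> length (butlast es)"
      then have "wmax ^ length (butlast es) \<le> wmax ^ L"
        by (rule power_decreasing) (use wmax_pos wmax_less in auto)
      then show False using L \<open>t < wmax ^ length (butlast es)\<close> by linarith
    qed
    then show "es \<in> {xs. set xs \<subseteq> E \<and> length xs \<le> L}" using sE by auto
  qed
  then show ?thesis using finite_lists_length_le[OF finE] finite_subset by blast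
qed

lemma F_noprefix:
  assumes "es1 \<in> F t" "es2 \<in> F t" "prefix es1 es2"
  shows "es1 = es2"
proof (rule ccontr)
  assume ne: "es1 \<noteq> es2"
  obtain zs where zs: "es2 = es1 @ zs" using assms(3) unfolding prefix_def by blast
  then have "zs \<noteq> []" using ne by auto
  then have bl: "butlast es2 = es1 @ butlast zs" using zs by (simp add: butlast_append)
  have sE: "set es2 \<subseteq> E" using F_D(1)[OF assms(2)] unfolding rooted_path_def by auto
  then have "set (butlast zs) \<subseteq> E" "set es1 \<subseteq> E" using zs by (auto dest: in_set_butlastD)
  then have "path_weight (butlast es2) \<le> path_weight es1"
    unfolding bl pw_append using pw_le1 pw_pos by (simp add: mult_left_le)
  then show False using F_D(3)[OF assms(1)] F_D(4)[OF assms(2)] by linarith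
qed

lemma F_disj:
  assumes "es1 \<in> F t" "es2 \<in> F t" "es1 \<noteq> es2"
  shows "{fst (path_interval es1)<..<snd (path_interval es1)} \<inter> {fst (path_interval es2)<..<snd (path_interval es2)} = {}"
proof -
  have "\<not> prefix es1 es2" "\<not> prefix es2 es1" using F_noprefix assms by blast+
  then show ?thesis using disjoint_paths F_D(1) assms(1,2) by blast
qed

lemma vertex_point:
  assumes "v \<in> V"
  shows "\<exists>y. 0 < y \<and> y < 1 \<and> (\<forall>\<Delta>. Inv (\<Delta>, v) \<longrightarrow> app (Tint \<Delta>) y \<in> K)"
proof -
  obtain n \<Delta>0 where n: "(\<Delta>0, v) \<in> netN r d K \<Phi> n" using assms unfolding tg_vertices_def by blast
  have inv: "Inv (\<Delta>0, v)" using netN_Inv n by blast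
  have ab: "fst \<Delta>0 < snd \<Delta>0" using Inv_D(1)[OF inv] .
  obtain x where x: "x \<in> K \<inter> {fst \<Delta>0<..<snd \<Delta>0}" using Inv_D(5)[OF inv] by blast
  then obtain f k where fk: "f \<in> v" "k \<in> K" "x = app (acomp (Tint \<Delta>0) f) k" using Inv_D(4)[OF inv] by blast
  define y where "y = app f k"
  have "app (Tint \<Delta>0) 0 < app (Tint \<Delta>0) y" "app (Tint \<Delta>0) y < app (Tint \<Delta>0) 1"
    using x fk unfolding y_def by auto
  then have y01: "0 < y" "y < 1" using app_Tint_less[OF ab] by blast+
  have "app (Tint \<Delta>) y \<in> K" if iv: "Inv (\<Delta>, v)" for \<Delta>
  proof -
    obtain \<sigma> where s: "\<sigma> \<in> lists I" "acomp (Tint \<Delta>) f = S \<sigma>" using Inv_D(3)[OF iv fk(1)] by blast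
    have "app (Tint \<Delta>) y = app (S \<sigma>) k" unfolding y_def using s(2) by (metis app_acomp)
    then show ?thesis using SK[OF s(1)] fk(2) by blast
  qed
  then show ?thesis using y01 by blast
qed

definition xv :: "aff set \<Rightarrow> real" where
  "xv v = (SOME y. 0 < y \<and> y < 1 \<and> (\<forall>\<Delta>. Inv (\<Delta>, v) \<longrightarrow> app (Tint \<Delta>) y \<in> K))"

lemma xv_props:
  assumes "v \<in> V"
  shows "0 < xv v" "xv v < 1" "Inv (\<Delta>, v) \<Longrightarrow> app (Tint \<Delta>) (xv v) \<in> K"
  using someI_ex[OF vertex_point[OF assms]] unfolding xv_def by blast+

definition mg where "mg = Min ((\<lambda>v. min (xv v) (1 - xv v)) ` V)"

lemma mg_pos: "0 < mg"
  unfolding mg_def using finV aid_V xv_props by (subst Min_gr_iff) auto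

lemma mg_le: "v \<in> V \<Longrightarrow> mg \<le> xv v \<and> mg \<le> 1 - xv v"
proof -
  assume v: "v \<in> V"
  have "min (xv v) (1 - xv v) \<in> (\<lambda>v. min (xv v) (1 - xv v)) ` V" using v by (rule imageI)
  then have "mg \<le> min (xv v) (1 - xv v)" unfolding mg_def using finV by (intro Min_le) auto
  then show ?thesis by simp
qed

lemma path_point:
  assumes "rooted es"
  shows "\<exists>x\<in>K. fst (path_interval es) + mg * path_weight es \<le> x \<and> x + mg * path_weight es \<le> snd (path_interval es)"
proof -
  define \<Delta> where "\<Delta> = path_interval es"
  have nn: "(\<Delta>, vend es) \<in> netN r d K \<Phi> (length es)" using Corr[OF assms] unfolding \<Delta>_def .
  then have vV: "vend es \<in> V" unfolding tg_vertices_def by blast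
  have inv: "Inv (\<Delta>, vend es)" using netN_Inv nn by blast
  have ab: "fst \<Delta> < snd \<Delta>" using Inv_D(1)[OF inv] .
  define x where "x = app (Tint \<Delta>) (xv (vend es))"
  have xK: "x \<in> K" unfolding x_def using xv_props(3)[OF vV inv] .
  have pw: "path_weight es = snd \<Delta> - fst \<Delta>" using pi_diam unfolding \<Delta>_def by simp
  have m: "mg \<le> xv (vend es)" "mg \<le> 1 - xv (vend es)" using mg_le[OF vV] by auto
  have "fst \<Delta> + mg * path_weight es \<le> x"
    unfolding x_def app_Tint pw using m(1) ab by (simp add: mult.commute mult_right_mono)
  moreover have "x + mg * path_weight es \<le> snd \<Delta>"
  proof -
    have "mg * (snd \<Delta> - fst \<Delta>) \<le> (1 - xv (vend es)) * (snd \<Delta> - fst \<Delta>)"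
      using m(2) ab by (intro mult_right_mono) auto
    then show ?thesis unfolding x_def app_Tint pw by (simp add: algebra_simps)
  qed
  ultimately show ?thesis using xK unfolding \<Delta>_def by blast
qed

end

context wifs begin

lemma P0_finite: "Inv (\<Delta>, w) \<Longrightarrow> finite (P0 w)"
proof -
  assume inv: "Inv (\<Delta>, w)"
  have "P0 w \<subseteq> {0, 1} \<union> (\<lambda>(g, z). app g z) ` (Y0 w \<times> {0, 1})" unfolding P0_def by auto
  moreover have "finite ({0, 1} \<union> (\<lambda>(g, z). app g z) ` (Y0 w \<times> {0, 1::real}))"
    using Y0_finite[OF inv] by auto
  ultimately show ?thesis using finite_subset by blast
qed

lemma ncs_finite: "Inv (\<Delta>, w) \<Longrightarrow> finite (ncs w)"
proof -
  assume inv: "Inv (\<Delta>, w)"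
  have "ncs w \<subseteq> (\<lambda>(u, u'). ((u, u'), Wn w u u')) ` (P0 w \<times> P0 w)" unfolding ncs_def Qn_def by auto
  then show ?thesis using P0_finite[OF inv] finite_subset by blast
qed

lemma stop_exists:
  assumes "(\<Delta>, v) \<in> netN r d K \<Phi> n"
  shows "\<exists>w. nsame\<^sup>*\<^sup>* v w \<and> nstops w"
proof -
  have itr2: "\<forall>n. \<forall>x\<in>netN r d K \<Phi> n. \<exists>z. (same_step r d K \<Phi>)\<^sup>*\<^sup>* x z \<and> stops r d K \<Phi> z"
    using itr[unfolded is_iteration_rule_def] by (rule conjunct1[OF conjunct2])
  obtain z where z: "(same_step r d K \<Phi>)\<^sup>*\<^sup>* (\<Delta>, v) z" "stops r d K \<Phi> z"
    using itr2 assms by blast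
  have inv: "Inv (\<Delta>, v)" using netN_Inv assms by blast
  obtain w where w: "nsame\<^sup>*\<^sup>* v w" "z = (\<Delta>, w)" using rtr_iff[OF inv] z(1) by blast
  have "Inv (\<Delta>, w)" using nsame_rtr_Inv[OF w(1) inv] .
  then have "nstops w" using stops_iff z(2) w(2) by blast
  then show ?thesis using w(1) by blast
qed

lemma NCH_eq:
  assumes "nsame\<^sup>*\<^sup>* v w" "nstops w"
  shows "NCH v = ncs w"
proof -
  have "{ncs w' | w'. nsame\<^sup>*\<^sup>* v w' \<and> nstops w'} = {ncs w}"
    using nstops_unique[OF assms(1) _ assms(2)] assms by blast
  then show ?thesis unfolding NCH_def by simp
qed

lemma netN_finite: "finite (netN r d K \<Phi> n)"
proof (induction n)
  case 0 then show ?case by simp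
next
  case (Suc n)
  have "finite (children r d K \<Phi> x)" if x: "x \<in> netN r d K \<Phi> n" for x
  proof -
    obtain \<Delta> v where xd: "x = (\<Delta>, v)" by (metis prod.collapse)
    have inv: "Inv (\<Delta>, v)" using netN_Inv x xd by blast
    obtain w where w: "nsame\<^sup>*\<^sup>* v w" "nstops w" using stop_exists x xd by blast
    have "children r d K \<Phi> x = tr \<Delta> ` ncs w" using children_eq[OF inv] NCH_eq[OF w] xd by simp
    then show ?thesis using ncs_finite[OF nsame_rtr_Inv[OF w(1) inv]] by simp
  qed
  then show ?case using Suc by simp
qed

definition Unet :: "nat \<Rightarrow> real set" where
  "Unet n = (\<Union>x\<in>netN r d K \<Phi> n. K \<inter> {fst (fst x)<..<snd (fst x)})"

definition wst :: "npair \<Rightarrow> aff set" where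
  "wst x = (SOME w. nsame\<^sup>*\<^sup>* (snd x) w \<and> nstops w)"

definition Exc :: "nat \<Rightarrow> real set" where
  "Exc n = (\<Union>x\<in>netN r d K \<Phi> n. app (Tint (fst x)) ` P0 (wst x))"

lemma wst_props:
  assumes "(\<Delta>, v) \<in> netN r d K \<Phi> n"
  shows "nsame\<^sup>*\<^sup>* v (wst (\<Delta>, v))" "nstops (wst (\<Delta>, v))"
  using someI_ex[OF stop_exists[OF assms]] unfolding wst_def by auto

lemma Exc_finite: "finite (Exc n)"
proof -
  have "finite (app (Tint (fst x)) ` P0 (wst x))" if x: "x \<in> netN r d K \<Phi> n" for x
  proof -
    obtain \<Delta> v where xd: "x = (\<Delta>, v)" by (metis prod.collapse)
    have inv: "Inv (\<Delta>, v)" using netN_Inv x xd by blast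
    have "Inv (\<Delta>, wst x)" using nsame_rtr_Inv[OF wst_props(1) inv] x xd by blast
    then show ?thesis using P0_finite by blast
  qed
  then show ?thesis unfolding Exc_def using netN_finite by blast
qed

lemma local_cover:
  assumes x: "(\<Delta>, v) \<in> netN r d K \<Phi> n" and y: "y \<in> K" "fst \<Delta> < y" "y < snd \<Delta>"
    and ny: "y \<notin> app (Tint \<Delta>) ` P0 (wst (\<Delta>, v))"
  shows "y \<in> Unet (Suc n)"
proof -
  define w where "w = wst (\<Delta>, v)"
  have inv: "Inv (\<Delta>, v)" using netN_Inv x by blast
  have ws: "nsame\<^sup>*\<^sup>* v w" "nstops w" using wst_props[OF x] unfolding w_def by auto
  have invw: "Inv (\<Delta>, w)" using nsame_rtr_Inv[OF ws(1) inv] .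
  have ab: "fst \<Delta> < snd \<Delta>" using Inv_D(1)[OF inv] .
  define h where "h = app (Tint \<Delta>)"
  have hl: "h a < h b \<longleftrightarrow> a < b" for a b unfolding h_def using app_Tint_less[OF ab] .
  define z where "z = app (ainv (Tint \<Delta>)) y"
  have yz: "y = h z" unfolding z_def h_def using app_ainv2[of "Tint \<Delta>" y] ab by simp
  have zP: "z \<notin> P0 w" using ny yz unfolding w_def h_def by blast
  have z01: "0 < z" "z < 1" using y(2,3) hl[of 0 z] hl[of z 1] yz unfolding h_def by auto
  define L where "L = {q \<in> P0 w. q < z}"
  define R where "R = {q \<in> P0 w. z < q}"
  have finP: "finite (P0 w)" using P0_finite[OF invw] .
  have L: "finite L" "0 \<in> L" unfolding L_def using finP z01 by (auto simp: P0_def)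
  have R: "finite R" "1 \<in> R" unfolding R_def using finP z01 by (auto simp: P0_def)
  define u where "u = Max L"
  define u' where "u' = Min R"
  have uL: "u \<in> L" unfolding u_def using L by (intro Max_in) auto
  have uR: "u' \<in> R" unfolding u'_def using R by (intro Min_in) auto
  have uz: "u < z" "z < u'" "u \<in> P0 w" "u' \<in> P0 w" using uL uR unfolding L_def R_def by auto
  have btw: "\<forall>q\<in>P0 w. \<not> (u < q \<and> q < u')"
  proof (intro ballI notI)
    fix q assume q: "q \<in> P0 w" "u < q \<and> q < u'"
    consider "q < z" | "q = z" | "z < q" by linarith
    then show False
    proof cases
      case 1 then have "q \<in> L" unfolding L_def using q by auto
      then have "q \<le> u" unfolding u_def using L by (intro Max_ge) auto
      then show False using q by auto
    next
      case 2 then show False using q zP by auto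
    next
      case 3 then have "q \<in> R" unfolding R_def using q by auto
      then have "u' \<le> q" unfolding u'_def using R by (intro Min_le) auto
      then show False using q by auto
    qed
  qed
  have u0: "0 \<le> u" and u1: "u' \<le> 1" using uz P0_sub[of w] by auto
  have yin: "y \<in> {h u<..<h u'}" using yz uz hl by auto
  have "{h u<..<h u'} \<inter> K \<noteq> {}" using yin y(1) by blast
  then have "\<exists>g\<in>Y0 w. app g ` K \<inter> {u<..<u'} \<noteq> {}" using Kcond[OF invw u0 u1] unfolding h_def by blast
  moreover have "u < u'" using uz by linarith
  ultimately have Q: "Qn w u u'" unfolding Qn_def using uz btw by blast
  have "((u, u'), Wn w u u') \<in> ncs w" unfolding ncs_def using Q by blast
  then have "((u, u'), Wn w u u') \<in> NCH v" using NCH_eq[OF ws] by simp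
  then have "tr \<Delta> ((u, u'), Wn w u u') \<in> children r d K \<Phi> (\<Delta>, v)" using children_eq[OF inv] by blast
  then have "((h u, h u'), Wn w u u') \<in> netN r d K \<Phi> (Suc n)" using x unfolding h_def by (auto simp: tr_def)
  then show ?thesis unfolding Unet_def using yin y(1) by (intro UN_I[of "((h u, h u'), Wn w u u')"]) auto
qed

lemma exc_finite: "finite (K - Unet n)"
proof (induction n)
  case 0
  have "K - Unet 0 \<subseteq> {0, 1}" using K_sub by (auto simp: Unet_def root_pair_def)
  then show ?case using finite_subset by blast
next
  case (Suc n)
  have "K - Unet (Suc n) \<subseteq> (K - Unet n) \<union> Exc n"
  proof
    fix y assume y: "y \<in> K - Unet (Suc n)"
    show "y \<in> (K - Unet n) \<union> Exc n"
    proof (cases "y \<in> Unet n")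
      case False then show ?thesis using y by blast
    next
      case True
      then obtain x where x0: "x \<in> netN r d K \<Phi> n" "y \<in> K \<inter> {fst (fst x)<..<snd (fst x)}"
        unfolding Unet_def by blast
      then have x: "x \<in> netN r d K \<Phi> n" "y \<in> K" "fst (fst x) < y" "y < snd (fst x)" by auto
      obtain \<Delta> v where xd: "x = (\<Delta>, v)" by (metis prod.collapse)
      have "y \<in> app (Tint \<Delta>) ` P0 (wst (\<Delta>, v))"
        using local_cover[of \<Delta> v n y] x xd y by auto
      then show ?thesis unfolding Exc_def using x(1) xd by (intro UnI2 UN_I[of x]) auto
    qed
  qed
  then show ?case using Suc Exc_finite finite_subset by blast
qed

lemma K_islimpt: "y \<in> K \<Longrightarrow> y islimpt K"
  unfolding islimpt_approachable dist_real_def using K_perfect by blast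

lemma cover_level:
  assumes "y \<in> K"
  shows "\<exists>x\<in>netN r d K \<Phi> n. y \<in> {fst (fst x)..snd (fst x)}"
proof -
  have "K = (K - Unet n) \<union> (K \<inter> Unet n)" by blast
  then have "y islimpt ((K - Unet n) \<union> (K \<inter> Unet n))" using K_islimpt[OF assms] by simp
  then have l: "y islimpt (K \<inter> Unet n)" using islimpt_Un_finite[OF exc_finite] by blast
  define C where "C = (\<Union>x\<in>netN r d K \<Phi> n. {fst (fst x)..snd (fst x)})"
  have "K \<inter> Unet n \<subseteq> C" unfolding Unet_def C_def by auto
  then have "y islimpt C" using l islimpt_subset by blast
  moreover have "closed C" unfolding C_def using netN_finite by (intro closed_UN) auto
  ultimately have "y \<in> C" using closed_limpt by blast
  then show ?thesis unfolding C_def by blast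
qed

lemma F_cover:
  assumes t: "0 < t" "t < 1" and y: "y \<in> K"
  shows "\<exists>es\<in>F t. y \<in> {fst (path_interval es)..snd (path_interval es)}"
proof -
  obtain n where n: "wmax ^ n < t" using real_arch_pow_inv[OF t(1) wmax_less] by blast
  obtain x where x: "x \<in> netN r d K \<Phi> n" "y \<in> {fst (fst x)..snd (fst x)}" using cover_level[OF y] by blast
  obtain es where es: "rooted es" "length es = n" "path_interval es = fst x"
    using RevCorr[OF x(1)] by blast
  have sE: "set es \<subseteq> E" using es(1) unfolding rooted_path_def by auto
  have "path_weight es \<le> wmax ^ n" using pw_upper[OF sE] es(2) by simp
  then have "path_weight es < t" using n by linarith
  define P where "P k \<longleftrightarrow> path_weight (take k es) \<le> t" for k
  have Pn: "P n" unfolding P_def using es(2) \<open>path_weight es < t\<close> by simp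
  define k where "k = (LEAST k. P k)"
  have Pk: "P k" unfolding k_def using Pn by (rule LeastI)
  have kn: "k \<le> n" unfolding k_def using Pn by (rule Least_le)
  have k0: "k \<noteq> 0"
  proof
    assume "k = 0"
    then have "path_weight (take k es) = 1" by (simp add: pw_Nil)
    then show False using Pk t(2) unfolding P_def by simp
  qed
  define es' where "es' = take k es"
  have dec: "es = es' @ drop k es" unfolding es'_def by simp
  have "rooted (es' @ drop k es)" using es(1) unfolding es'_def by simp
  then have R': "rooted es'" by (rule rooted_prefix)
  have ne: "es' \<noteq> []" unfolding es'_def using k0 kn es(2) by auto
  have bl: "butlast es' = take (k - 1) es" unfolding es'_def using kn es(2) by (simp add: butlast_take)
  have "k - 1 < k" using k0 by simp
  then have "k - 1 < (LEAST k. P k)" unfolding k_def .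
  then have "\<not> P (k - 1)" by (rule not_less_Least)
  then have tb: "t < path_weight (butlast es')" unfolding bl P_def by simp
  have pk: "path_weight es' \<le> t" using Pk unfolding P_def es'_def .
  have es'F: "es' \<in> F t" unfolding Fset_def using R' ne pk tb by blast
  have sd: "set (drop k es) \<subseteq> E" by (rule subset_trans[OF set_drop_subset sE])
  have "fst (path_interval es') \<le> fst (path_interval es) \<and> snd (path_interval es) \<le> snd (path_interval es')"
    using pi_nest[OF sd pi_rooted_pos[OF R']] dec by auto
  then have "y \<in> {fst (path_interval es')..snd (path_interval es')}" using x(2) es(3) by auto
  then show ?thesis using es'F by blast
qed

end

lemma count_disjoint:
  fixes A :: "'a \<Rightarrow> real set"
  assumes fin: "finite S" and meas: "\<And>i. i \<in> S \<Longrightarrow> A i \<in> sets borel"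
    and dis: "disjoint_family_on A S" and sub: "\<And>i. i \<in> S \<Longrightarrow> A i \<subseteq> {c..c + L}"
    and lb: "\<And>i. i \<in> S \<Longrightarrow> l \<le> measure lborel (A i)" and L: "0 \<le> L"
  shows "real (card S) * l \<le> L"
proof -
  have fin_i: "emeasure lborel (A i) \<noteq> \<infinity>" if "i \<in> S" for i
  proof -
    have "emeasure lborel (A i) \<le> emeasure lborel {c..c + L}" using sub[OF that] by (intro emeasure_mono) auto
    also have "\<dots> < \<infinity>" by (simp add: emeasure_lborel_Icc_eq)
    finally show ?thesis by simp
  qed
  have "real (card S) * l = (\<Sum>i\<in>S. l)" by simp
  also have "\<dots> \<le> (\<Sum>i\<in>S. measure lborel (A i))" using lb by (intro sum_mono) auto
  also have "\<dots> = measure lborel (\<Union>i\<in>S. A i)"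
    using fin meas dis fin_i by (intro measure_finite_Union[symmetric]) auto
  also have "\<dots> \<le> measure lborel {c..c + L}"
  proof (rule measure_mono_fmeasurable)
    show "(\<Union>i\<in>S. A i) \<subseteq> {c..c + L}" using sub by blast
    show "(\<Union>i\<in>S. A i) \<in> sets lborel" using fin meas by auto
    show "{c..c + L} \<in> fmeasurable lborel" by (simp add: fmeasurable_def emeasure_lborel_Icc_eq)
  qed
  also have "\<dots> = L" using L by simp
  finally show ?thesis .
qed

lemma cball_disj_far:
  fixes x y t :: real
  assumes "cball x t \<inter> cball y t = {}"
  shows "2 * t < \<bar>x - y\<bar>"
proof (rule ccontr)
  assume "\<not> 2 * t < \<bar>x - y\<bar>"
  then have "(x + y) / 2 \<in> cball x t \<inter> cball y t" by (auto simp: dist_real_def abs_if field_simps split: if_splits)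
  then show False using assms by blast
qed

context wifs begin

definition rho :: "edge list \<Rightarrow> real" where
  "rho es = measure \<mu> {fst (path_interval es)..snd (path_interval es)}"

definition adm :: "real \<Rightarrow> real set \<Rightarrow> bool" where
  "adm t X \<longleftrightarrow> finite X \<and> X \<subseteq> K \<and> pairwise (\<lambda>x y. cball x t \<inter> cball y t = {}) X"

definition SF :: "real \<Rightarrow> real \<Rightarrow> real" where
  "SF q t = (\<Sum>es\<in>F t. rho es powr q)"

lemma rho_pos:
  assumes "rooted es"
  shows "0 < rho es"
proof -
  obtain x where x: "x \<in> K" "fst (path_interval es) + mg * path_weight es \<le> x"
    "x + mg * path_weight es \<le> snd (path_interval es)" using path_point[OF assms] by blast
  have pos: "0 < mg * path_weight es" using mg_pos pw_pos[of es] assms unfolding rooted_path_def by auto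
  have "cball x (mg * path_weight es) \<subseteq> {fst (path_interval es)..snd (path_interval es)}"
    using x unfolding cball_eq_atLeastAtMost by auto
  then have "measure \<mu> (cball x (mg * path_weight es)) \<le> rho es" unfolding rho_def by (intro M_mono) auto
  then show ?thesis using M_pos[OF x(1) pos] by linarith
qed

lemma M_null_compl: "measure \<mu> (UNIV - K) = 0"
proof -
  have "K \<in> sets \<mu>" using setsM compact_imp_closed[OF cK] by (simp add: borel_closed)
  moreover have "UNIV \<in> sets \<mu>" using setsM by simp
  ultimately have "measure \<mu> (UNIV - K) = measure \<mu> UNIV - measure \<mu> K"
    using finite_measure.finite_measure_Diff[OF prob_space.finite_measure[OF probM]] by blast
  then show ?thesis using M_K M_space by simp
qed

lemma ball_le_sum:
  assumes t: "0 < t" "t < 1"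
  shows "measure \<mu> (cball x s) \<le> (\<Sum>es\<in>{es\<in>F t. {fst (path_interval es)..snd (path_interval es)} \<inter> cball x s \<noteq> {}}. rho es)"
proof -
  define N where "N = {es\<in>F t. {fst (path_interval es)..snd (path_interval es)} \<inter> cball x s \<noteq> {}}"
  have finN: "finite N" unfolding N_def using F_finite[OF t(1)] by simp
  have cov: "cball x s \<inter> K \<subseteq> (\<Union>es\<in>N. {fst (path_interval es)..snd (path_interval es)})"
  proof
    fix y assume y: "y \<in> cball x s \<inter> K"
    then obtain es where "es \<in> F t" "y \<in> {fst (path_interval es)..snd (path_interval es)}"
      using F_cover[OF t] by blast
    then show "y \<in> (\<Union>es\<in>N. {fst (path_interval es)..snd (path_interval es)})" unfolding N_def using y by blast
  qed
  have "measure \<mu> (cball x s) \<le> measure \<mu> ((cball x s \<inter> K) \<union> (UNIV - K))"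
    using setsM compact_imp_closed[OF cK] by (intro M_mono) (auto simp: borel_closed)
  also have "\<dots> \<le> measure \<mu> (cball x s \<inter> K) + measure \<mu> (UNIV - K)"
    using setsM compact_imp_closed[OF cK] by (intro measure_Un_le) (auto simp: borel_closed)
  also have "\<dots> = measure \<mu> (cball x s \<inter> K)" using M_null_compl by simp
  also have "\<dots> \<le> measure \<mu> (\<Union>es\<in>N. {fst (path_interval es)..snd (path_interval es)})"
    using cov finN by (intro M_mono) auto
  also have "\<dots> \<le> (\<Sum>es\<in>N. rho es)" unfolding rho_def using finN setsM by (intro measure_UNION_le) auto
  finally show ?thesis unfolding N_def .
qed

lemma card_N_bound:
  assumes t: "0 < t"
  shows "real (card {es\<in>F t. {fst (path_interval es)..snd (path_interval es)} \<inter> cball x t \<noteq> {}}) \<le> 4 / wmin"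
proof -
  define N where "N = {es\<in>F t. {fst (path_interval es)..snd (path_interval es)} \<inter> cball x t \<noteq> {}}"
  have "real (card N) * (wmin * t) \<le> 4 * t"
  proof (rule count_disjoint[where A = "\<lambda>es. {fst (path_interval es)<..<snd (path_interval es)}" and c = "x - 2 * t"])
    show "finite N" unfolding N_def using F_finite[OF t] by simp
    show "disjoint_family_on (\<lambda>es. {fst (path_interval es)<..<snd (path_interval es)}) N"
      unfolding disjoint_family_on_def N_def using F_disj by blast
    fix es assume es: "es \<in> N"
    then have esF: "es \<in> F t" unfolding N_def by blast
    show "{fst (path_interval es)<..<snd (path_interval es)} \<in> sets borel" by simp
    have d: "snd (path_interval es) - fst (path_interval es) \<le> t" "fst (path_interval es) < snd (path_interval es)"
      "wmin * t < snd (path_interval es) - fst (path_interval es)"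
      using F_D[OF esF] by auto
    obtain y where "y \<in> {fst (path_interval es)..snd (path_interval es)}" "y \<in> cball x t"
      using es unfolding N_def by blast
    then have "x - 2 * t \<le> fst (path_interval es)" "snd (path_interval es) \<le> x + 2 * t"
      using d unfolding cball_eq_atLeastAtMost by auto
    then show "{fst (path_interval es)<..<snd (path_interval es)} \<subseteq> {x - 2 * t..x - 2 * t + 4 * t}" by auto
    show "wmin * t \<le> measure lborel {fst (path_interval es)<..<snd (path_interval es)}" using d by simp
  next
    show "0 \<le> 4 * t" using t by simp
  qed
  then have "real (card N) * wmin \<le> 4" using t by (simp add: mult.assoc[symmetric])
  then show ?thesis unfolding N_def using wmin_pos by (simp add: field_simps)
qed

lemma card_mult_bound:
  assumes t: "0 < t" and X: "adm t X" and es: "es \<in> F t"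
  shows "real (card {x\<in>X. {fst (path_interval es)..snd (path_interval es)} \<inter> cball x t \<noteq> {}}) \<le> 5 / 2"
proof -
  define M where "M = {x\<in>X. {fst (path_interval es)..snd (path_interval es)} \<inter> cball x t \<noteq> {}}"
  define a where "a = fst (path_interval es)"
  have d: "snd (path_interval es) - a \<le> t" using F_D[OF es] unfolding a_def by auto
  have "real (card M) * (2 * t) \<le> 5 * t"
  proof (rule count_disjoint[where A = "\<lambda>x. cball x t" and c = "a - 2 * t"])
    show "finite M" unfolding M_def using X unfolding adm_def by simp
    show "disjoint_family_on (\<lambda>x. cball x t) M"
      unfolding disjoint_family_on_def M_def using X unfolding adm_def pairwise_def by blast
    fix x assume x: "x \<in> M"
    show "cball x t \<in> sets borel" by simp
    obtain y where "y \<in> {a..snd (path_interval es)}" "y \<in> cball x t"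
      using x unfolding M_def a_def by blast
    then have "a - t \<le> x" "x \<le> a + 2 * t" using d unfolding cball_eq_atLeastAtMost by auto
    then show "cball x t \<subseteq> {a - 2 * t..a - 2 * t + 5 * t}" unfolding cball_eq_atLeastAtMost by auto
    show "2 * t \<le> measure lborel (cball x t)" using t unfolding cball_eq_atLeastAtMost by simp
  next
    show "0 \<le> 5 * t" using t by simp
  qed
  then have "real (card M) * 2 \<le> 5" using t by (simp add: mult.assoc[symmetric] mult.commute[of _ t])
  then show ?thesis unfolding M_def by simp
qed

lemma A_pos:
  assumes t: "0 < t" "t < 1" and q: "0 \<le> q" and X: "adm t X"
  shows "(\<Sum>x\<in>X. measure \<mu> (cball x t) powr q) \<le> (4 / wmin) powr q * (5 / 2) * SF q t"
proof -
  define N where "N x = {es\<in>F t. {fst (path_interval es)..snd (path_interval es)} \<inter> cball x t \<noteq> {}}" for x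
  have finF: "finite (F t)" using F_finite[OF t(1)] .
  have finX: "finite X" using X unfolding adm_def by simp
  have C: "0 \<le> (4 / wmin) powr q" by simp
  have each: "measure \<mu> (cball x t) powr q \<le> (4 / wmin) powr q * (\<Sum>es\<in>N x. rho es powr q)" if x: "x \<in> X" for x
  proof -
    have xK: "x \<in> K" using x X unfolding adm_def by blast
    have finN: "finite (N x)" unfolding N_def using finF by simp
    obtain es0 where es0: "es0 \<in> F t" "x \<in> {fst (path_interval es0)..snd (path_interval es0)}"
      using F_cover[OF t xK] by blast
    have "es0 \<in> N x" unfolding N_def using es0 t(1) by auto
    then have neN: "N x \<noteq> {}" by blast
    define m where "m = Max (rho ` N x)"
    have mN: "m \<in> rho ` N x" unfolding m_def using finN neN by (intro Max_in) auto
    have le_m: "rho es \<le> m" if "es \<in> N x" for es unfolding m_def using finN that by (intro Max_ge) auto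
    have m0: "0 \<le> m" using mN rho_pos F_D(1) unfolding N_def by (auto intro: less_imp_le)
    have "measure \<mu> (cball x t) \<le> (\<Sum>es\<in>N x. rho es)" using ball_le_sum[OF t] unfolding N_def .
    also have "\<dots> \<le> (\<Sum>es\<in>N x. m)" using le_m by (intro sum_mono) auto
    also have "\<dots> = real (card (N x)) * m" by simp
    also have "\<dots> \<le> (4 / wmin) * m" using card_N_bound[OF t(1), of x] m0 unfolding N_def by (intro mult_right_mono) auto
    finally have "measure \<mu> (cball x t) powr q \<le> ((4 / wmin) * m) powr q"
      using q by (intro powr_mono2) auto
    also have "\<dots> = (4 / wmin) powr q * m powr q" by (rule powr_mult)
    also have "m powr q \<le> (\<Sum>es\<in>N x. rho es powr q)"
    proof -
      obtain es1 where es1: "es1 \<in> N x" "m = rho es1" using mN by blast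
      show ?thesis unfolding es1(2) using finN es1(1) by (intro member_le_sum) auto
    qed
    then have "(4 / wmin) powr q * m powr q \<le> (4 / wmin) powr q * (\<Sum>es\<in>N x. rho es powr q)"
      using C by (intro mult_left_mono) auto
    finally show ?thesis .
  qed
  have "(\<Sum>x\<in>X. measure \<mu> (cball x t) powr q) \<le> (\<Sum>x\<in>X. (4 / wmin) powr q * (\<Sum>es\<in>N x. rho es powr q))"
    using each by (intro sum_mono) auto
  also have "\<dots> = (4 / wmin) powr q * (\<Sum>x\<in>X. \<Sum>es\<in>{es\<in>F t. {fst (path_interval es)..snd (path_interval es)} \<inter> cball x t \<noteq> {}}. rho es powr q)"
    unfolding N_def by (simp add: sum_distrib_left)
  also have "(\<Sum>x\<in>X. \<Sum>es\<in>{es\<in>F t. {fst (path_interval es)..snd (path_interval es)} \<inter> cball x t \<noteq> {}}. rho es powr q)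
      = (\<Sum>es\<in>F t. \<Sum>x\<in>{x\<in>X. {fst (path_interval es)..snd (path_interval es)} \<inter> cball x t \<noteq> {}}. rho es powr q)"
    by (rule sum.swap_restrict[OF finX finF])
  also have "\<dots> = (\<Sum>es\<in>F t. real (card {x\<in>X. {fst (path_interval es)..snd (path_interval es)} \<inter> cball x t \<noteq> {}}) * rho es powr q)"
    by simp
  also have "\<dots> \<le> (\<Sum>es\<in>F t. 5 / 2 * rho es powr q)"
    using card_mult_bound[OF t(1) X] by (intro sum_mono mult_right_mono) auto
  also have "\<dots> = 5 / 2 * SF q t" unfolding SF_def by (simp add: sum_distrib_left)
  finally show ?thesis using C by (simp add: mult.assoc mult_left_mono)
qed

lemma A_neg:
  assumes t: "0 < t" "t < 1" and q: "q < 0" and X: "adm t X"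
  shows "(\<Sum>x\<in>X. measure \<mu> (cball x t) powr q) \<le> SF q t"
proof -
  have finF: "finite (F t)" using F_finite[OF t(1)] .
  have finX: "finite X" using X unfolding adm_def by simp
  have ex: "\<exists>es\<in>F t. x \<in> {fst (path_interval es)..snd (path_interval es)}" if "x \<in> X" for x
    using F_cover[OF t] that X unfolding adm_def by blast
  define g where "g x = (SOME es. es \<in> F t \<and> x \<in> {fst (path_interval es)..snd (path_interval es)})" for x
  have g: "g x \<in> F t" "x \<in> {fst (path_interval (g x))..snd (path_interval (g x))}" if "x \<in> X" for x
    using someI_ex[OF ex[OF that, unfolded Bex_def]] unfolding g_def by auto
  have inj: "inj_on g X"
  proof (rule inj_onI)
    fix x y assume xy: "x \<in> X" "y \<in> X" "g x = g y"
    show "x = y"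
    proof (rule ccontr)
      assume "x \<noteq> y"
      then have "cball x t \<inter> cball y t = {}" using X xy unfolding adm_def pairwise_def by blast
      then have far: "2 * t < \<bar>x - y\<bar>" by (rule cball_disj_far)
      have "snd (path_interval (g x)) - fst (path_interval (g x)) \<le> t" using F_D(3,6)[OF g(1)[OF xy(1)]] by simp
      moreover have "y \<in> {fst (path_interval (g x))..snd (path_interval (g x))}" using g(2)[OF xy(2)] xy(3) by simp
      ultimately show False using g(2)[OF xy(1)] far t(1) by auto
    qed
  qed
  have "(\<Sum>x\<in>X. measure \<mu> (cball x t) powr q) \<le> (\<Sum>x\<in>X. rho (g x) powr q)"
  proof (rule sum_mono)
    fix x assume x: "x \<in> X"
    have sub: "{fst (path_interval (g x))..snd (path_interval (g x))} \<subseteq> cball x t"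
      using g[OF x] F_D(3,6)[OF g(1)[OF x]] unfolding cball_eq_atLeastAtMost by auto
    have "rho (g x) \<le> measure \<mu> (cball x t)" unfolding rho_def using sub by (intro M_mono) auto
    moreover have "0 < rho (g x)" using rho_pos F_D(1)[OF g(1)[OF x]] by blast
    ultimately show "measure \<mu> (cball x t) powr q \<le> rho (g x) powr q" using q by (intro powr_mono2') auto
  qed
  also have "\<dots> = (\<Sum>es\<in>g ` X. rho es powr q)" using sum.reindex[OF inj, of "\<lambda>es. rho es powr q"] by (simp add: comp_def)
  also have "\<dots> \<le> SF q t" unfolding SF_def using g(1) finF by (intro sum_mono2) auto
  finally show ?thesis .
qed

end

context wifs begin

definition pt :: "edge list \<Rightarrow> real" where
  "pt es = (SOME x. x \<in> K \<and> fst (path_interval es) + mg * path_weight es \<le> x \<and>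
                    x + mg * path_weight es \<le> snd (path_interval es))"

lemma pt_props:
  assumes "rooted es"
  shows "pt es \<in> K" "fst (path_interval es) + mg * path_weight es \<le> pt es"
    "pt es + mg * path_weight es \<le> snd (path_interval es)"
  using someI_ex[OF path_point[OF assms, unfolded Bex_def]] unfolding pt_def by blast+

lemma pt_in:
  assumes "rooted es"
  shows "fst (path_interval es) < pt es" "pt es < snd (path_interval es)"
proof -
  have "0 < mg * path_weight es" using mg_pos pw_pos[of es] assms unfolding rooted_path_def by auto
  then show "fst (path_interval es) < pt es" "pt es < snd (path_interval es)" using pt_props[OF assms] by auto
qed

lemma B_neg:
  assumes t: "0 < t" "t < 1" and q: "q < 0"
  shows "\<exists>X. adm (mg * wmin / 2 * t) X \<and> SF q t \<le> (\<Sum>x\<in>X. measure \<mu> (cball x (mg * wmin / 2 * t)) powr q)"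
proof -
  define s where "s = mg * wmin / 2 * t"
  have s0: "0 < s" unfolding s_def using mg_pos wmin_pos t by simp
  have finF: "finite (F t)" using F_finite[OF t(1)] .
  have ballin: "cball (pt es) s \<subseteq> {fst (path_interval es)<..<snd (path_interval es)}" if es: "es \<in> F t" for es
  proof -
    have R: "rooted es" using F_D(1)[OF es] .
    have "wmin * t < path_weight es" using F_D(5)[OF es] .
    then have "mg * (wmin * t) < mg * path_weight es" using mg_pos by simp
    moreover have "s = mg * (wmin * t) / 2" unfolding s_def by (simp add: algebra_simps)
    moreover have "0 < mg * (wmin * t)" using mg_pos wmin_pos t by simp
    ultimately have "s < mg * path_weight es" by linarith
    then show ?thesis using pt_props[OF R] unfolding cball_eq_atLeastAtMost by auto
  qed
  have inj: "inj_on pt (F t)"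
  proof (rule inj_onI)
    fix e1 e2 assume e: "e1 \<in> F t" "e2 \<in> F t" "pt e1 = pt e2"
    show "e1 = e2"
    proof (rule ccontr)
      assume "e1 \<noteq> e2"
      then have d: "{fst (path_interval e1)<..<snd (path_interval e1)} \<inter> {fst (path_interval e2)<..<snd (path_interval e2)} = {}"
        using F_disj e by blast
      have "pt e1 \<in> {fst (path_interval e1)<..<snd (path_interval e1)}" using pt_in F_D(1)[OF e(1)] by auto
      moreover have "pt e1 \<in> {fst (path_interval e2)<..<snd (path_interval e2)}" using pt_in F_D(1)[OF e(2)] e(3) by auto
      ultimately show False using d by blast
    qed
  qed
  define X where "X = pt ` F t"
  have adm: "adm s X"
    unfolding adm_def
  proof (intro conjI)
    show "finite X" unfolding X_def using finF by simp
    show "X \<subseteq> K"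
    proof
      fix x assume "x \<in> X"
      then obtain es where "es \<in> F t" "x = pt es" unfolding X_def by blast
      then show "x \<in> K" using pt_props(1)[OF F_D(1)] by blast
    qed
    show "pairwise (\<lambda>x y. cball x s \<inter> cball y s = {}) X"
      unfolding pairwise_def X_def
    proof (intro ballI impI)
      fix x y assume "x \<in> pt ` F t" "y \<in> pt ` F t" "x \<noteq> y"
      then obtain e1 e2 where e: "e1 \<in> F t" "e2 \<in> F t" "x = pt e1" "y = pt e2" "e1 \<noteq> e2" by blast
      have d: "{fst (path_interval e1)<..<snd (path_interval e1)} \<inter> {fst (path_interval e2)<..<snd (path_interval e2)} = {}"
        using F_disj[OF e(1,2,5)] .
      have b1: "cball x s \<subseteq> {fst (path_interval e1)<..<snd (path_interval e1)}" using ballin[OF e(1)] e(3) by simp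
      have b2: "cball y s \<subseteq> {fst (path_interval e2)<..<snd (path_interval e2)}" using ballin[OF e(2)] e(4) by simp
      show "cball x s \<inter> cball y s = {}" using d b1 b2 by blast
    qed
  qed
  have "SF q t \<le> (\<Sum>es\<in>F t. measure \<mu> (cball (pt es) s) powr q)"
    unfolding SF_def
  proof (rule sum_mono)
    fix es assume es: "es \<in> F t"
    have "measure \<mu> (cball (pt es) s) \<le> rho es" unfolding rho_def using ballin[OF es] by (intro M_mono) auto
    moreover have "0 < measure \<mu> (cball (pt es) s)" using M_pos[OF pt_props(1)[OF F_D(1)[OF es]] s0] .
    ultimately show "rho es powr q \<le> measure \<mu> (cball (pt es) s) powr q" using q by (intro powr_mono2') auto
  qed
  also have "\<dots> = (\<Sum>x\<in>X. measure \<mu> (cball x s) powr q)"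
    unfolding X_def using sum.reindex[OF inj, of "\<lambda>x. measure \<mu> (cball x s) powr q"] by (simp add: comp_def)
  finally show ?thesis using adm unfolding s_def by blast
qed

lemma floor_bounds:
  assumes "0 < t"
  shows "3 * t * real_of_int \<lfloor>x / (3 * t)\<rfloor> \<le> x" "x < 3 * t * (real_of_int \<lfloor>x / (3 * t)\<rfloor> + 1)"
proof -
  have a: "real_of_int \<lfloor>x / (3 * t)\<rfloor> \<le> x / (3 * t)" by (rule of_int_floor_le)
  have b: "x / (3 * t) < real_of_int \<lfloor>x / (3 * t)\<rfloor> + 1" by (rule real_of_int_floor_add_one_gt)
  have "3 * t * real_of_int \<lfloor>x / (3 * t)\<rfloor> \<le> 3 * t * (x / (3 * t))"
    by (rule mult_left_mono[OF a]) (use assms in auto)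
  then show "3 * t * real_of_int \<lfloor>x / (3 * t)\<rfloor> \<le> x" using assms by simp
  have "3 * t * (x / (3 * t)) < 3 * t * (real_of_int \<lfloor>x / (3 * t)\<rfloor> + 1)"
    by (rule mult_strict_left_mono[OF b]) (use assms in auto)
  then show "x < 3 * t * (real_of_int \<lfloor>x / (3 * t)\<rfloor> + 1)" using assms by simp
qed

lemma B_pos:
  assumes t: "0 < t" "t < 1" and q: "0 \<le> q"
  shows "\<exists>X1 X2. adm t X1 \<and> adm t X2 \<and>
     SF q t \<le> 5 / wmin * ((\<Sum>x\<in>X1. measure \<mu> (cball x t) powr q) + (\<Sum>x\<in>X2. measure \<mu> (cball x t) powr q))"
proof -
  have finF: "finite (F t)" using F_finite[OF t(1)] .
  define lab where "lab es = \<lfloor>pt es / (3 * t)\<rfloor>" for es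
  define Lb where "Lb = lab ` F t"
  have finLb: "finite Lb" unfolding Lb_def using finF by simp
  define cell where "cell j = {es \<in> F t. lab es = j}" for j
  have lab_b: "3 * t * real_of_int (lab es) \<le> pt es" "pt es < 3 * t * (real_of_int (lab es) + 1)" for es
    unfolding lab_def using floor_bounds[OF t(1)] by auto
  have pt_I: "pt es \<in> {fst (path_interval es)..snd (path_interval es)}" if "es \<in> F t" for es
    using pt_in[OF F_D(1)[OF that]] by auto
  have cell_ne: "cell j \<noteq> {}" if "j \<in> Lb" for j using that unfolding Lb_def cell_def by auto
  have cell_fin: "finite (cell j)" for j unfolding cell_def using finF by simp
  define rep where "rep j = (SOME es. es \<in> cell j \<and> (\<forall>e\<in>cell j. rho e \<le> rho es))" for j
  have rep_ex: "\<exists>es. es \<in> cell j \<and> (\<forall>e\<in>cell j. rho e \<le> rho es)" if jL: "j \<in> Lb" for j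
  proof -
    obtain m where m: "m \<in> rho ` cell j" "m = Max (rho ` cell j)"
      using Max_in[of "rho ` cell j"] cell_fin cell_ne[OF jL] by auto
    then obtain es where es: "es \<in> cell j" "rho es = m" by blast
    have "\<forall>e\<in>cell j. rho e \<le> rho es" using es m cell_fin by auto
    then show ?thesis using es by blast
  qed
  have rep: "rep j \<in> cell j" "\<And>e. e \<in> cell j \<Longrightarrow> rho e \<le> rho (rep j)" if "j \<in> Lb" for j
    using someI_ex[OF rep_ex[OF that]] unfolding rep_def by blast+
  have rep_lab: "lab (rep j) = j" "rep j \<in> F t" if "j \<in> Lb" for j using rep(1)[OF that] unfolding cell_def by auto
  have card_cell: "real (card (cell j)) \<le> 5 / wmin" for j
  proof -
    have "real (card (cell j)) * (wmin * t) \<le> 5 * t"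
    proof (rule count_disjoint[where A = "\<lambda>es. {fst (path_interval es)<..<snd (path_interval es)}" and c = "3 * t * real_of_int j - t"])
      show "finite (cell j)" by (rule cell_fin)
      show "disjoint_family_on (\<lambda>es. {fst (path_interval es)<..<snd (path_interval es)}) (cell j)"
        unfolding disjoint_family_on_def cell_def using F_disj by blast
      fix es assume es: "es \<in> cell j"
      then have esF: "es \<in> F t" and lj: "lab es = j" unfolding cell_def by auto
      show "{fst (path_interval es)<..<snd (path_interval es)} \<in> sets borel" by simp
      have d: "snd (path_interval es) - fst (path_interval es) \<le> t"
        "wmin * t < snd (path_interval es) - fst (path_interval es)"
        "fst (path_interval es) < snd (path_interval es)" using F_D[OF esF] by auto
      have p: "pt es \<in> {fst (path_interval es)..snd (path_interval es)}" using pt_I[OF esF] .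
      have "3 * t * real_of_int j \<le> pt es" "pt es < 3 * t * (real_of_int j + 1)" using lab_b[of es] lj by auto
      then show "{fst (path_interval es)<..<snd (path_interval es)} \<subseteq> {3 * t * real_of_int j - t..3 * t * real_of_int j - t + 5 * t}"
        using d p by (auto simp: algebra_simps)
      show "wmin * t \<le> measure lborel {fst (path_interval es)<..<snd (path_interval es)}" using d by simp
    next
      show "0 \<le> 5 * t" using t by simp
    qed
    then have "real (card (cell j)) * wmin \<le> 5" using t by (simp add: mult.assoc[symmetric])
    then show ?thesis using wmin_pos by (simp add: field_simps)
  qed
  define B where "B j = measure \<mu> (cball (pt (rep j)) t) powr q" for j
  have cell_bound: "(\<Sum>es\<in>cell j. rho es powr q) \<le> 5 / wmin * B j" if j: "j \<in> Lb" for j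
  proof -
    have "(\<Sum>es\<in>cell j. rho es powr q) \<le> (\<Sum>es\<in>cell j. rho (rep j) powr q)"
    proof (rule sum_mono)
      fix es assume "es \<in> cell j"
      then have "rho es \<le> rho (rep j)" "0 \<le> rho es" using rep(2)[OF j] rho_pos F_D(1) unfolding cell_def
        by (auto intro: less_imp_le)
      then show "rho es powr q \<le> rho (rep j) powr q" using q by (intro powr_mono2) auto
    qed
    also have "\<dots> = real (card (cell j)) * rho (rep j) powr q" by simp
    also have "\<dots> \<le> 5 / wmin * rho (rep j) powr q" using card_cell by (intro mult_right_mono) auto
    also have "rho (rep j) powr q \<le> B j"
    proof -
      have RF: "rep j \<in> F t" using rep_lab[OF j] by simp
      have sub: "{fst (path_interval (rep j))..snd (path_interval (rep j))} \<subseteq> cball (pt (rep j)) t"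
        using pt_I[OF RF] F_D(3,6)[OF RF] unfolding cball_eq_atLeastAtMost by auto
      have "rho (rep j) \<le> measure \<mu> (cball (pt (rep j)) t)" unfolding rho_def using sub by (intro M_mono) auto
      then show ?thesis unfolding B_def using q rho_pos[OF F_D(1)[OF RF]] by (intro powr_mono2) auto
    qed
    then have "5 / wmin * rho (rep j) powr q \<le> 5 / wmin * B j" using wmin_pos by (intro mult_left_mono) auto
    finally show ?thesis .
  qed
  have "SF q t = (\<Sum>j\<in>Lb. \<Sum>es\<in>cell j. rho es powr q)"
    unfolding SF_def cell_def using sum.group[OF finF finLb, of lab "\<lambda>es. rho es powr q"] Lb_def by simp
  also have "\<dots> \<le> (\<Sum>j\<in>Lb. 5 / wmin * B j)" using cell_bound by (intro sum_mono) auto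
  also have "\<dots> = 5 / wmin * (\<Sum>j\<in>Lb. B j)" by (simp add: sum_distrib_left)
  also have "(\<Sum>j\<in>Lb. B j) = (\<Sum>j\<in>{j\<in>Lb. even j}. B j) + (\<Sum>j\<in>{j\<in>Lb. odd j}. B j)"
  proof -
    have "Lb = {j\<in>Lb. even j} \<union> {j\<in>Lb. odd j}" by auto
    moreover have "{j\<in>Lb. even j} \<inter> {j\<in>Lb. odd j} = {}" by auto
    ultimately show ?thesis using finLb sum.union_disjoint[of "{j\<in>Lb. even j}" "{j\<in>Lb. odd j}" B] by auto
  qed
  finally have main: "SF q t \<le> 5 / wmin * ((\<Sum>j\<in>{j\<in>Lb. even j}. B j) + (\<Sum>j\<in>{j\<in>Lb. odd j}. B j))" .
  have cls: "adm t ((\<lambda>j. pt (rep j)) ` J) \<and> (\<Sum>j\<in>J. B j) = (\<Sum>x\<in>(\<lambda>j. pt (rep j)) ` J. measure \<mu> (cball x t) powr q)"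
    if J: "J \<subseteq> Lb" "\<And>j j'. j \<in> J \<Longrightarrow> j' \<in> J \<Longrightarrow> j \<noteq> j' \<Longrightarrow> 2 \<le> \<bar>j - j'\<bar>" for J
  proof -
    have finJ: "finite J" using finite_subset[OF J(1) finLb] .
    have inj: "inj_on (\<lambda>j. pt (rep j)) J"
    proof (rule inj_onI)
      fix j j' assume jj: "j \<in> J" "j' \<in> J" "pt (rep j) = pt (rep j')"
      have "lab (rep j) = lab (rep j')" unfolding lab_def using jj(3) by simp
      moreover have "lab (rep j) = j" "lab (rep j') = j'" using rep_lab(1) jj(1,2) J(1) by blast+
      ultimately show "j = j'" by simp
    qed
    have far: "cball (pt (rep j)) t \<inter> cball (pt (rep j')) t = {}" if jj: "j \<in> J" "j' \<in> J" "j \<noteq> j'" for j j'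
    proof -
      have l: "lab (rep j) = j" "lab (rep j') = j'" using rep_lab jj J(1) by auto
      have d: "2 \<le> \<bar>j - j'\<bar>" using J(2)[OF jj] .
      have b1: "3 * t * real_of_int j \<le> pt (rep j)" "pt (rep j) < 3 * t * (real_of_int j + 1)"
        using lab_b[of "rep j"] l by auto
      have b2: "3 * t * real_of_int j' \<le> pt (rep j')" "pt (rep j') < 3 * t * (real_of_int j' + 1)"
        using lab_b[of "rep j'"] l by auto
      have "2 * t < \<bar>pt (rep j) - pt (rep j')\<bar>"
      proof (cases "j < j'")
        case True
        then have "real_of_int j + 2 \<le> real_of_int j'" using d by linarith
        then have "3 * t * (real_of_int j + 2) \<le> 3 * t * real_of_int j'" using t by (intro mult_left_mono) auto
        then show ?thesis using b1 b2 t by (auto simp: algebra_simps)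
      next
        case False
        then have "real_of_int j' + 2 \<le> real_of_int j" using d jj(3) by linarith
        then have "3 * t * (real_of_int j' + 2) \<le> 3 * t * real_of_int j" using t by (intro mult_left_mono) auto
        then show ?thesis using b1 b2 t by (auto simp: algebra_simps)
      qed
      then show ?thesis unfolding cball_eq_atLeastAtMost by auto
    qed
    have "adm t ((\<lambda>j. pt (rep j)) ` J)"
      unfolding adm_def
    proof (intro conjI)
      show "finite ((\<lambda>j. pt (rep j)) ` J)" using finJ by simp
      show "(\<lambda>j. pt (rep j)) ` J \<subseteq> K" using J(1) rep_lab pt_props(1) F_D(1) by blast
      show "pairwise (\<lambda>x y. cball x t \<inter> cball y t = {}) ((\<lambda>j. pt (rep j)) ` J)"
        unfolding pairwise_def using far by auto
    qed
    moreover have "(\<Sum>j\<in>J. B j) = (\<Sum>x\<in>(\<lambda>j. pt (rep j)) ` J. measure \<mu> (cball x t) powr q)"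
      unfolding B_def using sum.reindex[OF inj, of "\<lambda>x. measure \<mu> (cball x t) powr q"] by (simp add: comp_def)
    ultimately show ?thesis by blast
  qed
  have ev: "2 \<le> \<bar>j - j'\<bar>" if "j \<in> {j\<in>Lb. even j}" "j' \<in> {j\<in>Lb. even j}" "j \<noteq> j'" for j j'
  proof -
    have "even (j - j')" using that by auto
    then obtain k where "j - j' = 2 * k" by blast
    then show ?thesis using that(3) by (cases "k = 0") (auto simp: abs_mult)
  qed
  have od: "2 \<le> \<bar>j - j'\<bar>" if "j \<in> {j\<in>Lb. odd j}" "j' \<in> {j\<in>Lb. odd j}" "j \<noteq> j'" for j j'
  proof -
    have "even (j - j')" using that by auto
    then obtain k where "j - j' = 2 * k" by blast
    then show ?thesis using that(3) by (cases "k = 0") (auto simp: abs_mult)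
  qed
  obtain X1 where X1: "adm t X1" "(\<Sum>j\<in>{j\<in>Lb. even j}. B j) = (\<Sum>x\<in>X1. measure \<mu> (cball x t) powr q)"
    using cls[of "{j\<in>Lb. even j}"] ev by blast
  obtain X2 where X2: "adm t X2" "(\<Sum>j\<in>{j\<in>Lb. odd j}. B j) = (\<Sum>x\<in>X2. measure \<mu> (cball x t) powr q)"
    using cls[of "{j\<in>Lb. odd j}"] od by blast
  show ?thesis using main X1 X2 by (intro exI[of _ X1] exI[of _ X2]) auto
qed

end

lemma liminf_transfer:
  fixes A B h e :: "real \<Rightarrow> real" and c :: real
  assumes c: "0 < c" and ev: "eventually (\<lambda>t. B (c * t) * h t + e t \<le> A t) (at_right 0)"
    and h: "(h \<longlongrightarrow> 1) (at_right 0)" and e: "(e \<longlongrightarrow> 0) (at_right 0)"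
  shows "Liminf (at_right 0) (\<lambda>t. ereal (B t)) \<le> Liminf (at_right 0) (\<lambda>t. ereal (A t))"
proof (unfold le_Liminf_iff, intro allI impI)
  fix y assume y: "y < Liminf (at_right 0) (\<lambda>t. ereal (B t))"
  obtain r where r: "y < ereal r" "ereal r < Liminf (at_right 0) (\<lambda>t. ereal (B t))"
    using ereal_dense2[OF y] by blast
  have "eventually (\<lambda>s. ereal r < ereal (B s)) (at_right 0)"
    using r(2) le_Liminf_iff[THEN iffD1, OF order.refl] by blast
  then have "eventually (\<lambda>s. r < B s) (at_right (0::real))" by simp
  then obtain b where b: "b > 0" "\<And>s. 0 < s \<Longrightarrow> s < b \<Longrightarrow> r < B s"
    unfolding eventually_at_right_field by blast
  have evB: "eventually (\<lambda>t. r < B (c * t)) (at_right 0)"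
    unfolding eventually_at_right_field
  proof (intro exI[of _ "b / c"] conjI allI impI)
    show "0 < b / c" using b c by simp
    fix t :: real assume "0 < t" "t < b / c"
    then have "0 < c * t" "c * t < b" using c by (auto simp: field_simps)
    then show "r < B (c * t)" using b(2) by blast
  qed
  have evh: "eventually (\<lambda>t. 0 < h t) (at_right 0)" using order_tendstoD(1)[OF h] by simp
  have ev2: "eventually (\<lambda>t. r * h t + e t \<le> A t) (at_right 0)"
    using evB evh ev
  proof eventually_elim
    case (elim t)
    then have "r * h t \<le> B (c * t) * h t" by (intro mult_right_mono) auto
    then show ?case using elim(3) by linarith
  qed
  have lim: "((\<lambda>t. r * h t + e t) \<longlongrightarrow> r * 1 + 0) (at_right 0)"
    by (intro tendsto_intros h e)
  show "eventually (\<lambda>t. y < ereal (A t)) (at_right 0)"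
  proof (cases y)
    case (real y0)
    then have "y0 < r" using r(1) by simp
    then have "eventually (\<lambda>t. y0 < r * h t + e t) (at_right 0)" using order_tendstoD(1)[OF lim] by simp
    then show ?thesis using ev2 by eventually_elim (auto simp: real)
  next
    case PInf then show ?thesis using r(1) by simp
  next
    case MInf then show ?thesis by simp
  qed
qed

lemma ln_div_0: "((\<lambda>t. C / ln t) \<longlongrightarrow> 0) (at_right (0::real))"
  by (rule tendsto_divide_0[OF tendsto_const filterlim_mono[OF ln_at_0 at_bot_le_at_infinity order.refl]])

context wifs begin

definition LQ :: "real \<Rightarrow> real \<Rightarrow> real set" where
  "LQ q s = {\<Sum>x\<in>X. measure \<mu> (cball x s) powr q | X.
               finite X \<and> X \<subseteq> K \<and> pairwise (\<lambda>x y. cball x s \<inter> cball y s = {}) X}"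

definition C1 :: "real \<Rightarrow> real" where
  "C1 q = (if 0 \<le> q then (4 / wmin) powr q * (5 / 2) else 1)"

lemma C1_pos: "0 < C1 q"
  unfolding C1_def using wmin_pos by auto

lemma LQ_bound:
  assumes s: "0 < s" "s < 1" and v: "v \<in> LQ q s"
  shows "v \<le> C1 q * SF q s"
proof -
  obtain X where X: "v = (\<Sum>x\<in>X. measure \<mu> (cball x s) powr q)" "adm s X"
    using v unfolding LQ_def adm_def by blast
  show ?thesis
  proof (cases "0 \<le> q")
    case True then show ?thesis using A_pos[OF s True X(2)] X(1) unfolding C1_def by simp
  next
    case False then show ?thesis using A_neg[OF s _ X(2)] X(1) unfolding C1_def by simp
  qed
qed

lemma LQ_mem: "adm s X \<Longrightarrow> (\<Sum>x\<in>X. measure \<mu> (cball x s) powr q) \<in> LQ q s"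
  unfolding LQ_def adm_def by blast

lemma LQ_bdd: "0 < s \<Longrightarrow> s < 1 \<Longrightarrow> bdd_above (LQ q s)"
  using LQ_bound unfolding bdd_above_def by blast

lemma adm_0: "0 < s \<Longrightarrow> adm s {0}"
  unfolding adm_def using zero_in_K by auto

lemma SB_ge: "0 < s \<Longrightarrow> s < 1 \<Longrightarrow> adm s X \<Longrightarrow> (\<Sum>x\<in>X. measure \<mu> (cball x s) powr q) \<le> Sup (LQ q s)"
  using LQ_mem LQ_bdd by (intro cSup_upper) auto

lemma SB_pos: "0 < s \<Longrightarrow> s < 1 \<Longrightarrow> 0 < Sup (LQ q s)"
proof -
  assume s: "0 < s" "s < 1"
  have "0 < measure \<mu> (cball 0 s)" using M_pos[OF zero_in_K s(1)] .
  then have "0 < (\<Sum>x\<in>{0}. measure \<mu> (cball x s) powr q)" by simp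
  also have "\<dots> \<le> Sup (LQ q s)" using SB_ge[OF s adm_0[OF s(1)]] .
  finally show ?thesis .
qed

lemma SB_le: "0 < s \<Longrightarrow> s < 1 \<Longrightarrow> Sup (LQ q s) \<le> C1 q * SF q s"
proof -
  assume s: "0 < s" "s < 1"
  have "LQ q s \<noteq> {}" using LQ_mem[OF adm_0[OF s(1)]] by blast
  then show ?thesis using LQ_bound[OF s] by (intro cSup_least) auto
qed

lemma SF_pos: "0 < t \<Longrightarrow> t < 1 \<Longrightarrow> 0 < SF q t"
proof -
  assume t: "0 < t" "t < 1"
  obtain es where es: "es \<in> F t" using F_cover[OF t zero_in_K] by blast
  have pos: "0 < rho e powr q" if "e \<in> F t" for e using rho_pos[OF F_D(1)[OF that]] by simp
  have "0 < rho es powr q" using pos[OF es] .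
  also have "\<dots> \<le> SF q t" unfolding SF_def using F_finite[OF t(1)] es pos
    by (intro member_le_sum) (auto intro: less_imp_le)
  finally show ?thesis .
qed

definition cc :: "real \<Rightarrow> real" where
  "cc q = (if 0 \<le> q then 1 else mg * wmin / 2)"

definition C2 :: "real \<Rightarrow> real" where
  "C2 q = (if 0 \<le> q then 2 * (5 / wmin) else 1)"

lemma mg_le_half: "mg \<le> 1 / 2"
  using mg_le[OF aid_V] by linarith

lemma wmin_le1: "wmin \<le> 1"
  unfolding wmin_def using finE by (intro Min_le) auto

lemma cc_props: "0 < cc q" "cc q \<le> 1"
proof -
  show "0 < cc q" unfolding cc_def using mg_pos wmin_pos by auto
  have "mg * wmin \<le> 1 / 2 * 1" using mg_le_half wmin_le1 mg_pos wmin_pos by (intro mult_mono) auto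
  then show "cc q \<le> 1" unfolding cc_def by auto
qed

lemma C2_pos: "0 < C2 q" unfolding C2_def using wmin_pos by auto

lemma SF_le: "0 < t \<Longrightarrow> t < 1 \<Longrightarrow> SF q t \<le> C2 q * Sup (LQ q (cc q * t))"
proof -
  assume t: "0 < t" "t < 1"
  show ?thesis
  proof (cases "0 \<le> q")
    case True
    obtain X1 X2 where X: "adm t X1" "adm t X2"
      "SF q t \<le> 5 / wmin * ((\<Sum>x\<in>X1. measure \<mu> (cball x t) powr q) + (\<Sum>x\<in>X2. measure \<mu> (cball x t) powr q))"
      using B_pos[OF t True] by blast
    have "(\<Sum>x\<in>X1. measure \<mu> (cball x t) powr q) + (\<Sum>x\<in>X2. measure \<mu> (cball x t) powr q) \<le> Sup (LQ q t) + Sup (LQ q t)"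
      using SB_ge[OF t X(1), of q] SB_ge[OF t X(2), of q] by linarith
    then have "SF q t \<le> 5 / wmin * (2 * Sup (LQ q t))"
      using X(3) wmin_pos by (smt (verit) divide_pos_pos mult_left_mono)
    then show ?thesis using True unfolding C2_def cc_def by simp
  next
    case False
    then have q: "q < 0" by simp
    define s where "s = mg * wmin / 2 * t"
    have c1: "0 < mg * wmin / 2" "mg * wmin / 2 \<le> 1" using cc_props[of q] False unfolding cc_def by auto
    have "s \<le> 1 * t" unfolding s_def using c1 t by (intro mult_right_mono) auto
    then have sl: "s < 1" using t by linarith
    have s0: "0 < s" unfolding s_def using c1 t by simp
    note s = s0 sl
    obtain X where X: "adm s X" "SF q t \<le> (\<Sum>x\<in>X. measure \<mu> (cball x s) powr q)"
      using B_neg[OF t q] unfolding s_def by blast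
    then have "SF q t \<le> Sup (LQ q s)" using SB_ge[OF s X(1), of q] by linarith
    then show ?thesis using False unfolding C2_def cc_def s_def by simp
  qed
qed

lemma main_eq:
  "Liminf (at_right 0) (\<lambda>t. ereal (ln (Sup (LQ q t)) / ln t)) =
   Liminf (at_right 0) (\<lambda>t. ereal (ln (SF q t) / ln t))"
proof (rule antisym)
  show "Liminf (at_right 0) (\<lambda>t. ereal (ln (SF q t) / ln t)) \<le> Liminf (at_right 0) (\<lambda>t. ereal (ln (Sup (LQ q t)) / ln t))"
  proof (rule liminf_transfer[where c = 1 and h = "\<lambda>_. 1" and e = "\<lambda>t. ln (C1 q) / ln t"])
    show "0 < (1::real)" by simp
    show "((\<lambda>_. 1) \<longlongrightarrow> (1::real)) (at_right 0)" by simp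
    show "((\<lambda>t. ln (C1 q) / ln t) \<longlongrightarrow> 0) (at_right 0)" by (rule ln_div_0)
    show "eventually (\<lambda>t. ln (SF q (1 * t)) / ln (1 * t) * 1 + ln (C1 q) / ln t \<le> ln (Sup (LQ q t)) / ln t) (at_right 0)"
      unfolding eventually_at_right_field
    proof (intro exI[of _ 1] conjI allI impI)
      fix t :: real assume t: "0 < t" "t < 1"
      have lt: "ln t < 0" using t by simp
      have "ln (Sup (LQ q t)) \<le> ln (C1 q * SF q t)"
        using SB_le[OF t, of q] SB_pos[OF t, of q] by simp
      also have "\<dots> = ln (C1 q) + ln (SF q t)" using C1_pos[of q] SF_pos[OF t, of q] by (simp add: ln_mult)
      finally have "(ln (C1 q) + ln (SF q t)) / ln t \<le> ln (Sup (LQ q t)) / ln t"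
        using lt by (intro divide_right_mono_neg) auto
      then show "ln (SF q (1 * t)) / ln (1 * t) * 1 + ln (C1 q) / ln t \<le> ln (Sup (LQ q t)) / ln t"
        by (simp add: add_divide_distrib)
    qed simp
  qed
next
  show "Liminf (at_right 0) (\<lambda>t. ereal (ln (Sup (LQ q t)) / ln t)) \<le> Liminf (at_right 0) (\<lambda>t. ereal (ln (SF q t) / ln t))"
  proof (rule liminf_transfer[where c = "cc q" and h = "\<lambda>t. ln (cc q) / ln t + 1" and e = "\<lambda>t. ln (C2 q) / ln t"])
    show "0 < cc q" by (rule cc_props)
    show "((\<lambda>t. ln (cc q) / ln t + 1) \<longlongrightarrow> 1) (at_right 0)"
      using tendsto_add[OF ln_div_0[of "ln (cc q)"] tendsto_const[of 1]] by simp
    show "((\<lambda>t. ln (C2 q) / ln t) \<longlongrightarrow> 0) (at_right 0)" by (rule ln_div_0)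
    show "eventually (\<lambda>t. ln (Sup (LQ q (cc q * t))) / ln (cc q * t) * (ln (cc q) / ln t + 1) + ln (C2 q) / ln t
        \<le> ln (SF q t) / ln t) (at_right 0)"
      unfolding eventually_at_right_field
    proof (intro exI[of _ 1] conjI allI impI)
      fix t :: real assume t: "0 < t" "t < 1"
      have lt: "ln t < 0" using t by simp
      have c: "0 < cc q" "cc q \<le> 1" using cc_props by auto
      have ct: "0 < cc q * t" "cc q * t < 1" using c t by (auto intro: le_less_trans[OF mult_right_mono[of _ 1 t]])
      have lct: "ln (cc q * t) < 0" using ct by simp
      have "ln (SF q t) \<le> ln (C2 q * Sup (LQ q (cc q * t)))"
        using SF_le[OF t, of q] SF_pos[OF t, of q] by simp
      also have "\<dots> = ln (C2 q) + ln (Sup (LQ q (cc q * t)))" using C2_pos[of q] SB_pos[OF ct, of q] by (simp add: ln_mult)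
      finally have "(ln (C2 q) + ln (Sup (LQ q (cc q * t)))) / ln t \<le> ln (SF q t) / ln t"
        using lt by (intro divide_right_mono_neg) auto
      moreover have "ln (Sup (LQ q (cc q * t))) / ln (cc q * t) * (ln (cc q) / ln t + 1)
          = ln (Sup (LQ q (cc q * t))) / ln t"
      proof -
        have "ln (cc q) / ln t + 1 = ln (cc q * t) / ln t" using c t lt by (simp add: ln_mult field_simps)
        then show ?thesis using lct lt by simp
      qed
      ultimately show "ln (Sup (LQ q (cc q * t))) / ln (cc q * t) * (ln (cc q) / ln t + 1) + ln (C2 q) / ln t
        \<le> ln (SF q t) / ln t" by (simp add: add_divide_distrib)
    qed simp
  qed
qed

end



theorem proposition5p2:
  fixes I :: "'i set" and r d p :: "'i \<Rightarrow> real" and K :: "real set"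
    and \<mu> :: "real measure" and \<Phi> :: "'i itrule" and q :: real
  assumes "finite I"
    and "\<forall>i\<in>I. 0 < \<bar>r i\<bar> \<and> \<bar>r i\<bar> < 1"
    and "\<forall>i\<in>I. p i > 0" and "(\<Sum>i\<in>I. p i) = 1"
    and "compact K" and "K \<noteq> {}" and "K = (\<Union>i\<in>I. (\<lambda>x. r i * x + d i) ` K)"
    and "\<not> (\<exists>x. K = {x})" and "convex hull K = {0..1}"
    and "sets \<mu> = sets borel" and "prob_space \<mu>"
    and "\<forall>E\<in>sets borel. measure \<mu> E = (\<Sum>i\<in>I. p i * measure \<mu> ((\<lambda>x. r i * x + d i) -` E))"
    and "is_iteration_rule I r d K \<Phi>"
    and "FNC r d K \<Phi>"
  shows "Lq_spectrum \<mu> K q =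
         Liminf (at_right 0) (\<lambda>t. ereal (
           ln (\<Sum>\<eta>\<in>Fset r d K \<Phi> t. measure \<mu> {fst (path_interval \<eta>)..snd (path_interval \<eta>)} powr q)
           / ln t))"
proof -
  interpret wifs I r d p K \<mu> \<Phi>
    by (rule wifs.intro[OF assms])
  show ?thesis using main_eq[of q] unfolding Lq_spectrum_def LQ_def SF_def rho_def .
qed

end
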